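(* Let $\mathbf x=(k,S,\Lambda,\mathbf a)$ be an abelian group $k$-parameter and $G=G_{\mathbf x}$. (1) If $U\subseteq{}^\omega S$, $u\subseteq{}^\omega S\setminus U$ is finite, $j\le k$, $|u|\le j$ and $|U|\le\aleph_{k-j}$, then the abelian group $G_{U\cup u}/G_{U,u}$ is free. (2) If $U\subseteq{}^\omega S$ and $|U|\le\aleph_k$, then $G_U$ is free.
   Context: For a set $S$, ${}^\omega S$ is the set of all functions $\omega\to S$. An abelian group $k$-parameter is $\mathbf x=(k,S,\Lambda,\mathbf a)$ with $k<\omega$, $S$ a set, $\Lambda\subseteq {}^{k+1}({}^\omega S)$ (sequences $\bar\eta=\langle\eta_0,\dots,\eta_k\rangle$, $\eta_\ell\in{}^\omega S$) and $\mathbf a:\Lambda\times\omega\to\mathbb Z$, $\mathbf a_{\bar\eta,n}=\mathbf a(\bar\eta,n)$. For $\bar\eta\in\Lambda$, $m\le k$, $n<\omega$, $\bar\eta\upharpoonleft\langle m,n\rangle$ is the sequence obtained from $\bar\eta$ by replacing $\eta_m$ with $\eta_m\restriction n$. $\Lambda_m=\{\bar\eta\upharpoonleft\langle m,n\rangle:\bar\eta\in\Lambda,n<\omega\}$, $\Lambda_{\le k}=\bigcup_{m\le k}\Lambda_m$. $G_{\mathbf x}$ is the abelian group generated by $z$, $x_{\bar\nu}$ ($\bar\nu\in\Lambda_{\le k}$), $y_{\bar\eta,n}$ ($\bar\eta\in\Lambda,n<\omega$) freely except for the relations $(n!)y_{\bar\eta,n+1}=y_{\bar\eta,n}+\mathbf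 a_{\bar\eta,n}z+\sum_{m\le k}x_{\bar\eta\upharpoonleft\langle m,n\rangle}$ ($\bar\eta\in\Lambda$, $n<\omega$). For $U\subseteq{}^\omega S$, $G_U$ is the subgroup of $G_{\mathbf x}$ generated by $\{z\}\cup\{y_{\bar\eta,n}:\bar\eta\in\Lambda\cap{}^{k+1}U,n<\omega\}\cup\{x_{\bar\eta\upharpoonleft\langle m,n\rangle}:\bar\eta\in\Lambda\cap{}^{k+1}U,m\le k,n<\omega\}$. For $U\subseteq{}^\omega S$ and finite $u\subseteq{}^\omega S$, $G_{U,u}$ is the subgroup of $G_{\mathbf x}$ generated by $\bigcup_{\eta\in u}G_{U\cup(u\setminus\{\eta\})}$ (so $G_{U,\emptyset}=\{0\}$). *)

theory Defs
  imports "HOL-Algebra.Free_Abelian_Groups"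
begin

(* A point of ^omega S is a function nat => 's; a (k+1)-tuple of such is a list of length k+1. *)
type_synonym 's tup = "(nat \<Rightarrow> 's) list"
(* a tuple in which one coordinate has been replaced by a finite initial segment *)
type_synonym 's ptup = "((nat \<Rightarrow> 's) + 's list) list"

definition ab_param :: "nat \<Rightarrow> 's set \<Rightarrow> 's tup set \<Rightarrow> bool" where
  "ab_param k S Lam \<longleftrightarrow> (\<forall>\<eta>\<in>Lam. length \<eta> = Suc k \<and> (\<forall>i<Suc k. range (\<eta> ! i) \<subseteq> S))"

definition restr :: "'s tup \<Rightarrow> nat \<Rightarrow> nat \<Rightarrow> 's ptup" where
  "restr \<eta> m n = map (\<lambda>i. if i = m then Inr (map (\<eta> ! i) [0..<n]) else Inl (\<eta> ! i)) [0..<length \<eta>]"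

definition Lambda_le :: "nat \<Rightarrow> 's tup set \<Rightarrow> 's ptup set" where
  "Lambda_le k Lam = {restr \<eta> m n | \<eta> m n. \<eta> \<in> Lam \<and> m \<le> k}"

datatype 's gen = GZ | GX "'s ptup" | GY "'s tup" nat

definition gens :: "nat \<Rightarrow> 's tup set \<Rightarrow> 's gen set" where
  "gens k Lam = {GZ} \<union> GX ` Lambda_le k Lam \<union> {GY \<eta> n | \<eta> n. \<eta> \<in> Lam}"

definition FG :: "nat \<Rightarrow> 's tup set \<Rightarrow> ('s gen \<Rightarrow>\<^sub>0 int) monoid" where
  "FG k Lam = free_Abelian_group (gens k Lam)"

definition rel_elem :: "nat \<Rightarrow> ('s tup \<Rightarrow> nat \<Rightarrow> int) \<Rightarrow> 's tup \<Rightarrow> nat \<Rightarrow> ('s gen \<Rightarrow>\<^sub>0 int)" where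
  "rel_elem k a \<eta> n =
     Poly_Mapping.single (GY \<eta> (Suc n)) (int (fact n)) - Poly_Mapping.single (GY \<eta> n) 1
     - Poly_Mapping.single GZ (a \<eta> n) - (\<Sum>m\<le>k. Poly_Mapping.single (GX (restr \<eta> m n)) 1)"

definition Rel :: "nat \<Rightarrow> 's tup set \<Rightarrow> ('s tup \<Rightarrow> nat \<Rightarrow> int) \<Rightarrow> ('s gen \<Rightarrow>\<^sub>0 int) set" where
  "Rel k Lam a = generate (FG k Lam) {rel_elem k a \<eta> n | \<eta> n. \<eta> \<in> Lam}"

definition Gx :: "nat \<Rightarrow> 's tup set \<Rightarrow> ('s tup \<Rightarrow> nat \<Rightarrow> int) \<Rightarrow> ('s gen \<Rightarrow>\<^sub>0 int) set monoid" where
  "Gx k Lam a = FG k Lam Mod Rel k Lam a"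

definition gimg :: "nat \<Rightarrow> 's tup set \<Rightarrow> ('s tup \<Rightarrow> nat \<Rightarrow> int) \<Rightarrow> 's gen \<Rightarrow> ('s gen \<Rightarrow>\<^sub>0 int) set" where
  "gimg k Lam a g = r_coset (FG k Lam) (Rel k Lam a) (Poly_Mapping.single g 1)"

definition G_U :: "nat \<Rightarrow> 's tup set \<Rightarrow> ('s tup \<Rightarrow> nat \<Rightarrow> int) \<Rightarrow> (nat \<Rightarrow> 's) set
                    \<Rightarrow> ('s gen \<Rightarrow>\<^sub>0 int) set set" where
  "G_U k Lam a U = generate (Gx k Lam a)
     ({gimg k Lam a GZ}
      \<union> {gimg k Lam a (GY \<eta> n) | \<eta> n. \<eta> \<in> Lam \<and> set \<eta> \<subseteq> U}
      \<union> {gimg k Lam a (GX (restr \<eta> m n)) | \<eta> m n. \<eta> \<in> Lam \<and> set \<eta> \<subseteq> U \<and> m \<le> k})"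

definition G_Uu :: "nat \<Rightarrow> 's tup set \<Rightarrow> ('s tup \<Rightarrow> nat \<Rightarrow> int) \<Rightarrow> (nat \<Rightarrow> 's) set
                    \<Rightarrow> (nat \<Rightarrow> 's) set \<Rightarrow> ('s gen \<Rightarrow>\<^sub>0 int) set set" where
  "G_Uu k Lam a U u = generate (Gx k Lam a) (\<Union>\<eta>\<in>u. G_U k Lam a (U \<union> (u - {\<eta>})))"

(* an abelian group is free iff it is isomorphic to the free abelian group on some set
   (a basis can always be chosen inside the carrier) *)
definition free_abgroup :: "('a, 'b) monoid_scheme \<Rightarrow> bool" where
  "free_abgroup G \<longleftrightarrow> (\<exists>B \<subseteq> carrier G. G \<cong> free_Abelian_group B)"

(* le_aleph n A  <->  |A| <= aleph_n, using aleph_0 = natLeq and aleph_{n+1} = cardSuc aleph_n *)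
fun le_aleph :: "nat \<Rightarrow> 'a set \<Rightarrow> bool" where
  "le_aleph 0 A \<longleftrightarrow> |A| \<le>o natLeq"
| "le_aleph (Suc n) A \<longleftrightarrow> (\<exists>B \<subseteq> A. le_aleph n B \<and> |A| \<le>o cardSuc |B| )"

end

theory Submission
  imports Defs
begin


definition covers :: "'a set \<Rightarrow> 'a list \<Rightarrow> nat \<Rightarrow> bool" where
  "covers u \<eta> m \<longleftrightarrow> (\<forall>\<nu>\<in>u. \<exists>i<length \<eta>. i \<noteq> m \<and> \<eta>!i = \<nu>)"

definition agree_off :: "nat \<Rightarrow> 'a list \<Rightarrow> 'a list \<Rightarrow> bool" where
  "agree_off m \<rho> \<eta> \<longleftrightarrow> length \<rho> = length \<eta> \<and> (\<forall>i<length \<eta>. i \<noteq> m \<longrightarrow> \<rho>!i = \<eta>!i)"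

definition Tset :: "nat \<Rightarrow> 'a set \<Rightarrow> 'a set \<Rightarrow> 'a list set" where
  "Tset k U u = {\<eta>. length \<eta> = Suc k \<and> set \<eta> \<subseteq> U \<union> u \<and> u \<subseteq> set \<eta>}"

lemma exists_cover:
  assumes "length \<eta> = Suc k" "u \<subseteq> set \<eta>" "finite u" "card u \<le> k"
  shows "\<exists>m\<le>k. covers u \<eta> m"
proof (rule ccontr)
  assume "\<not> ?thesis"
  then have "\<forall>m\<le>k. \<exists>\<nu>\<in>u. \<not>(\<exists>i<length \<eta>. i \<noteq> m \<and> \<eta>!i = \<nu>)" by (auto simp: covers_def)
  then obtain f where f: "\<forall>m\<le>k. f m \<in> u \<and> \<not>(\<exists>i<length \<eta>. i \<noteq> m \<and> \<eta>!i = f m)" by metis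
  have fm: "\<eta>!m = f m" if "m \<le> k" for m
  proof -
    have "f m \<in> set \<eta>" using f that assms(2) by auto
    then obtain i where "i < length \<eta>" "\<eta>!i = f m" by (auto simp: in_set_conv_nth)
    with f that show ?thesis by auto
  qed
  have "inj_on f {..k}"
  proof (rule inj_onI)
    fix x y assume xy: "x \<in> {..k}" "y \<in> {..k}" "f x = f y"
    show "x = y"
    proof (rule ccontr)
      assume ne: "x \<noteq> y"
      have yl: "y < length \<eta>" using xy(2) assms(1) by simp
      have ey: "\<eta>!y = f x" using fm[of y] xy by simp
      have "\<not>(\<exists>i<length \<eta>. i \<noteq> x \<and> \<eta>!i = f x)" using f xy(1) by simp
      then show False using yl ey ne by blast
    qed
  qed
  then have "card (f ` {..k}) = Suc k" by (simp add: card_image)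
  moreover have "f ` {..k} \<subseteq> u" using f by auto
  ultimately have "Suc k \<le> card u" using assms(3) by (metis card_mono)
  with assms(4) show False by simp
qed

lemma le_aleph_mono: "le_aleph n A \<Longrightarrow> |C| \<le>o |A| \<Longrightarrow> le_aleph n C"
proof (induction n arbitrary: A C)
  case 0 then show ?case using ordLeq_transitive by auto
next
  case (Suc n)
  from Suc.prems(1) obtain B where B: "B \<subseteq> A" "le_aleph n B" "|A| \<le>o cardSuc |B|" by auto
  show ?case
  proof (cases "|C| \<le>o |B|")
    case True
    then have "le_aleph n C" using Suc.IH B(2) by blast
    moreover have "|C| \<le>o cardSuc |C|"
      by (rule ordLess_imp_ordLeq[OF cardSuc_greater[OF card_of_Card_order]])
    ultimately show ?thesis by auto
  next
    case False
    then have "|B| <o |C|" using not_ordLeq_iff_ordLess[OF card_of_Well_order[of B] card_of_Well_order[of C]] by simp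
    then have "|B| \<le>o |C|" by (rule ordLess_imp_ordLeq)
    then have "\<exists>f. inj_on f B \<and> f ` B \<subseteq> C" by (rule card_of_ordLeq[THEN iffD2])
    then obtain f where f: "inj_on f B" "f ` B \<subseteq> C" by blast
    have "bij_betw f B (f ` B)" using f(1) by (rule bij_betw_imageI) simp
    then have iso: "|B| =o |f ` B|" using card_of_ordIso[of B "f ` B"] by blast
    have "le_aleph n (f ` B)" by (rule Suc.IH[OF B(2) ordIso_imp_ordLeq[OF ordIso_symmetric[OF iso]]])
    moreover have "cardSuc |B| =o cardSuc |f ` B|"
      by (rule cardSuc_invar_ordIso[OF card_of_Card_order card_of_Card_order, THEN iffD2, OF iso])
    then have "|C| \<le>o cardSuc |f ` B|"
      by (rule ordLeq_ordIso_trans[OF ordLeq_transitive[OF Suc.prems(2) B(3)]])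
    ultimately show ?thesis using f(2) by auto
  qed
qed

lemma le_aleph_empty: "le_aleph d {}"
proof (induction d)
  case 0
  have "|{}::'a set| <o natLeq" using finite_iff_ordLess_natLeq by blast
  then show ?case using ordLess_imp_ordLeq by auto
next
  case (Suc d)
  have "|{}::'a set| \<le>o cardSuc |{}::'a set|"
    by (rule ordLess_imp_ordLeq[OF cardSuc_greater[OF card_of_Card_order]])
  then show ?case using Suc by auto
qed

lemma le_aleph_underS:
  assumes "le_aleph (Suc d) U" "x \<in> U"
  shows "le_aleph d (underS (card_of U) x)"
proof -
  from assms(1) obtain B where B: "B \<subseteq> U" "le_aleph d B" "|U| \<le>o cardSuc |B|" by auto
  have "|underS (card_of U) x| <o |U|" by (rule card_of_underS[OF card_of_Card_order]) (simp add: Field_card_of assms(2))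
  then have "|underS (card_of U) x| <o cardSuc |B|" using B(3) by (rule ordLess_ordLeq_trans)
  then have "|underS (card_of U) x| \<le>o |B|" by (rule cardSuc_ordLeq_ordLess[OF card_of_Card_order card_of_Card_order, THEN iffD1])
  then show ?thesis using le_aleph_mono B(2) by blast
qed

lemma le_aleph0_countable: "le_aleph 0 U \<Longrightarrow> countable U"
proof -
  assume "le_aleph 0 U"
  then have "|U| \<le>o natLeq" by simp
  then have "|U| \<le>o |UNIV::nat set|" by (rule ordLeq_ordIso_trans[OF _ ordIso_symmetric[OF card_of_nat]])
  then have "\<exists>f::_\<Rightarrow>nat. inj_on f U \<and> f ` U \<subseteq> UNIV" by (rule card_of_ordLeq[THEN iffD2])
  then obtain f :: "_ \<Rightarrow> nat" where "inj_on f U" by blast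
  then show "countable U" unfolding countable_def by blast
qed

lemma lin_max:
  assumes lo: "Linear_order r" and fin: "finite S" "S \<noteq> {}" "S \<subseteq> Field r"
  shows "\<exists>x\<in>S. \<forall>y\<in>S. (y,x) \<in> r"
  using fin
proof (induction S rule: finite_ne_induct)
  case (singleton x)
  have "refl_on (Field r) r" using lo by (simp add: order_on_defs)
  then show ?case using singleton by (simp add: refl_on_def)
next
  case (insert a S)
  then obtain x where x: "x \<in> S" "\<forall>y\<in>S. (y,x) \<in> r" by auto
  have tr: "trans r" and rf: "refl_on (Field r) r" and tt: "total_on (Field r) r"
    using lo by (simp_all add: order_on_defs)
  have aF: "a \<in> Field r" and xF: "x \<in> Field r" using insert x(1) by auto
  have "(a,x) \<in> r \<or> (x,a) \<in> r"
  proof (cases "a = x")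
    case True then show ?thesis using rf aF by (simp add: refl_on_def)
  next
    case False then show ?thesis using tt aF xF by (simp add: total_on_def)
  qed
  then show ?case
  proof
    assume "(a,x) \<in> r" then show ?thesis using x by auto
  next
    assume xa: "(x,a) \<in> r"
    have "(y,a) \<in> r" if "y \<in> insert a S" for y
    proof (cases "y = a")
      case True then show ?thesis using rf aF by (simp add: refl_on_def)
    next
      case False
      then have "(y,x) \<in> r" using x that by auto
      then show ?thesis using tr xa by (meson transD)
    qed
    then show ?thesis by blast
  qed
qed


lemma comb:
  fixes U u :: "'a set"
  assumes "le_aleph d U" "finite u" "U \<inter> u = {}" "card u + d \<le> k"
  shows "\<exists>r m. wf r \<and> (\<forall>\<eta>\<in>Tset k U u. \<forall>\<rho>\<in>Tset k U u. \<eta> \<noteq> \<rho> \<longrightarrow> (\<eta>,\<rho>)\<in>r \<or> (\<rho>,\<eta>)\<in>r)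
     \<and> (\<forall>\<eta>\<in>Tset k U u. m \<eta> \<le> k \<and> covers u \<eta> (m \<eta>) \<and> finite {\<rho>\<in>Tset k U u. (\<rho>,\<eta>)\<in>r \<and> agree_off (m \<eta>) \<rho> \<eta>})"
  using assms
proof (induction d arbitrary: U u)
  case 0
  let ?T = "Tset k U u"
  have "countable U" using 0 le_aleph0_countable by blast
  then have "countable (U \<union> u)" using 0(2) by (simp add: countable_finite)
  then have "countable (lists (U \<union> u))" by simp
  moreover have "?T \<subseteq> lists (U \<union> u)" by (auto simp: Tset_def)
  ultimately have cT: "countable ?T" using countable_subset by blast
  define e where "e = to_nat_on ?T"
  have inj: "inj_on e ?T" unfolding e_def using cT by (rule inj_on_to_nat_on)
  define r where "r = inv_image less_than e"
  have "\<forall>\<eta>\<in>?T. \<exists>m\<le>k. covers u \<eta> m" using exists_cover 0 by (auto simp: Tset_def)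
  then obtain m where m: "\<forall>\<eta>\<in>?T. m \<eta> \<le> k \<and> covers u \<eta> (m \<eta>)" by metis
  show ?case
  proof (intro exI conjI)
    show "wf r" unfolding r_def by simp
    show "\<forall>\<eta>\<in>?T. \<forall>\<rho>\<in>?T. \<eta> \<noteq> \<rho> \<longrightarrow> (\<eta>,\<rho>)\<in>r \<or> (\<rho>,\<eta>)\<in>r"
    proof (intro ballI impI)
      fix \<eta> \<rho> assume "\<eta> \<in> ?T" "\<rho> \<in> ?T" "\<eta> \<noteq> \<rho>"
      then have "e \<eta> \<noteq> e \<rho>" using inj by (meson inj_on_def)
      then show "(\<eta>,\<rho>)\<in>r \<or> (\<rho>,\<eta>)\<in>r" unfolding r_def by auto
    qed
    show "\<forall>\<eta>\<in>?T. m \<eta> \<le> k \<and> covers u \<eta> (m \<eta>) \<and> finite {\<rho>\<in>?T. (\<rho>,\<eta>)\<in>r \<and> agree_off (m \<eta>) \<rho> \<eta>}"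
    proof
      fix \<eta> assume "\<eta> \<in> ?T"
      have "{\<rho>\<in>?T. (\<rho>,\<eta>)\<in>r \<and> agree_off (m \<eta>) \<rho> \<eta>} \<subseteq> e -` {..<e \<eta>} \<inter> ?T" unfolding r_def by auto
      moreover have "finite (e -` {..<e \<eta>} \<inter> ?T)" using inj by (intro finite_vimage_IntI) auto
      ultimately show "m \<eta> \<le> k \<and> covers u \<eta> (m \<eta>) \<and> finite {\<rho>\<in>?T. (\<rho>,\<eta>)\<in>r \<and> agree_off (m \<eta>) \<rho> \<eta>}"
        using m \<open>\<eta>\<in>?T\<close> finite_subset by blast
    qed
  qed
next
  case (Suc d)
  let ?T = "Tset k U u"
  define r0 where "r0 = |U|"
  have wo: "well_order_on U r0" unfolding r0_def by (rule card_of_well_order_on)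
  have F: "Field r0 = U" unfolding r0_def by (rule Field_card_of)
  have lo: "Linear_order r0" using wo F by (simp add: well_order_on_def)
  have wfr0: "wf (r0 - Id)" using wo by (simp add: well_order_on_def)
  have antis: "antisym r0" using lo by (simp add: order_on_defs)
  have tot: "total_on U r0" using lo F by (simp add: order_on_defs)
  have rf: "refl_on U r0" using lo F by (simp add: order_on_defs)
  have subU: "underS r0 x \<subseteq> U" for x
  proof -
    have "underS r0 x \<subseteq> Field r0" by (auto simp: underS_def Field_def)
    then show ?thesis using F by simp
  qed
  define ismax where "ismax \<eta> x \<longleftrightarrow> x \<in> set \<eta> \<inter> U \<and> (\<forall>y\<in>set \<eta> \<inter> U. (y,x) \<in> r0)" for \<eta> x
  have ex_max: "\<exists>x. ismax \<eta> x" if "set \<eta> \<inter> U \<noteq> {}" for \<eta>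
  proof -
    have "\<exists>x\<in>set \<eta> \<inter> U. \<forall>y\<in>set \<eta> \<inter> U. (y,x) \<in> r0"
      by (rule lin_max[OF lo]) (use that F in auto)
    then show ?thesis unfolding ismax_def by blast
  qed
  have uniq_max: "x = y" if "ismax \<eta> x" "ismax \<eta> y" for \<eta> x y
  proof -
    have "(x,y) \<in> r0" "(y,x) \<in> r0" using that unfolding ismax_def by auto
    then show ?thesis using antis unfolding antisym_def by blast
  qed
  define rk where "rk \<eta> = (if set \<eta> \<inter> U = {} then None else Some (THE x. ismax \<eta> x))" for \<eta>
  have rk_None: "rk \<eta> = None \<longleftrightarrow> set \<eta> \<inter> U = {}" for \<eta> by (simp add: rk_def)
  have rk_Some: "rk \<eta> = Some x \<longleftrightarrow> ismax \<eta> x" for \<eta> x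
  proof
    assume a: "rk \<eta> = Some x"
    then have ne: "set \<eta> \<inter> U \<noteq> {}" by (auto simp: rk_def split: if_splits)
    then have xe: "x = (THE x. ismax \<eta> x)" using a by (simp add: rk_def)
    obtain z where z: "ismax \<eta> z" using ex_max[OF ne] by blast
    have "(THE x. ismax \<eta> x) = z" using z uniq_max by blast
    then show "ismax \<eta> x" using xe z by simp
  next
    assume a: "ismax \<eta> x"
    then have ne: "set \<eta> \<inter> U \<noteq> {}" by (auto simp: ismax_def)
    have "(THE x. ismax \<eta> x) = x" using a uniq_max by blast
    then show "rk \<eta> = Some x" using ne by (simp add: rk_def)
  qed
  define Os where "Os = insert None (Some ` U)"
  define UU where "UU c = (case c of None \<Rightarrow> {} | Some x \<Rightarrow> underS r0 x)" for c
  define uu where "uu c = (case c of None \<Rightarrow> u | Some x \<Rightarrow> insert x u)" for c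
  have IHcond: "le_aleph d (UU c) \<and> finite (uu c) \<and> UU c \<inter> uu c = {} \<and> card (uu c) + d \<le> k" if "c \<in> Os" for c
  proof (cases c)
    case None then show ?thesis using Suc.prems le_aleph_empty by (simp add: UU_def uu_def)
  next
    case (Some x)
    then have x: "x \<in> U" using that Os_def by auto
    have "le_aleph d (UU c)" using le_aleph_underS[OF Suc.prems(1) x] Some by (simp add: UU_def r0_def)
    moreover have "x \<notin> underS r0 x" by (simp add: underS_def)
    moreover have "x \<notin> u" using x Suc.prems(3) by auto
    ultimately show ?thesis using Suc.prems(2,3,4) Some subU[of x] by (auto simp: UU_def uu_def)
  qed
  define PP where "PP c rr mm \<longleftrightarrow> wf rr \<and> (\<forall>\<eta>\<in>Tset k (UU c) (uu c). \<forall>\<rho>\<in>Tset k (UU c) (uu c). \<eta> \<noteq> \<rho> \<longrightarrow> (\<eta>,\<rho>)\<in>rr \<or> (\<rho>,\<eta>)\<in>rr)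
     \<and> (\<forall>\<eta>\<in>Tset k (UU c) (uu c). mm \<eta> \<le> k \<and> covers (uu c) \<eta> (mm \<eta>) \<and> finite {\<rho>\<in>Tset k (UU c) (uu c). (\<rho>,\<eta>)\<in>rr \<and> agree_off (mm \<eta>) \<rho> \<eta>})" for c rr mm
  have "\<forall>c\<in>Os. \<exists>rm. PP c (fst rm) (snd rm)"
  proof
    fix c assume "c \<in> Os"
    from Suc.IH[of "UU c" "uu c"] IHcond[OF this] obtain rr mm where "PP c rr mm"
      unfolding PP_def by blast
    then show "\<exists>rm. PP c (fst rm) (snd rm)" by (intro exI[of _ "(rr,mm)"]) simp
  qed
  then obtain RM where RM: "\<forall>c\<in>Os. PP c (fst (RM c)) (snd (RM c))" by (metis bchoice)
  define R where "R c = fst (RM c)" for c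
  define M where "M c = snd (RM c)" for c
  have RM': "PP c (R c) (M c)" if "c \<in> Os" for c using RM that by (simp add: R_def M_def)
  have inT: "rk \<eta> \<in> Os \<and> \<eta> \<in> Tset k (UU (rk \<eta>)) (uu (rk \<eta>))" if "\<eta> \<in> ?T" for \<eta>
  proof (cases "rk \<eta>")
    case None
    then have "set \<eta> \<inter> U = {}" by (simp add: rk_None)
    then show ?thesis using that None by (auto simp: Os_def UU_def uu_def Tset_def)
  next
    case (Some x)
    then have mx: "ismax \<eta> x" by (simp add: rk_Some)
    then have xU: "x \<in> U" by (simp add: ismax_def)
    have "set \<eta> \<subseteq> underS r0 x \<union> insert x u" using mx that by (auto simp: ismax_def Tset_def underS_def)
    then show ?thesis using that Some mx xU by (auto simp: Os_def UU_def uu_def Tset_def ismax_def)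
  qed
  have inT2: "\<eta> \<in> ?T \<and> rk \<eta> = c" if "c \<in> Os" "\<eta> \<in> Tset k (UU c) (uu c)" for \<eta> c
  proof (cases c)
    case None
    then have h: "set \<eta> \<subseteq> u" "u \<subseteq> set \<eta>" "length \<eta> = Suc k" using that by (auto simp: UU_def uu_def Tset_def)
    then have "set \<eta> \<inter> U = {}" using Suc.prems(3) by auto
    then show ?thesis using None h by (auto simp: rk_None Tset_def)
  next
    case (Some x)
    then have x: "x \<in> U" using that(1) by (auto simp: Os_def)
    have h: "set \<eta> \<subseteq> underS r0 x \<union> insert x u" "insert x u \<subseteq> set \<eta>" "length \<eta> = Suc k"
      using that Some by (auto simp: UU_def uu_def Tset_def)
    have "ismax \<eta> x"
      unfolding ismax_def
    proof (intro conjI ballI)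
      show "x \<in> set \<eta> \<inter> U" using h x by auto
      fix y assume y: "y \<in> set \<eta> \<inter> U"
      then have "y \<in> underS r0 x \<or> y = x" using h Suc.prems(3) by auto
      then show "(y,x) \<in> r0" using rf x by (auto simp: underS_def refl_on_def)
    qed
    then show ?thesis using h subU[of x] Some x by (auto simp: rk_Some Tset_def)
  qed
  define r where "r = {(\<rho>,\<eta>). \<rho> \<in> ?T \<and> \<eta> \<in> ?T \<and> ((rk \<rho> = rk \<eta> \<and> (\<rho>,\<eta>) \<in> R (rk \<eta>)) \<or> (rk \<rho> = None \<and> rk \<eta> \<noteq> None)
     \<or> (\<exists>x y. rk \<rho> = Some y \<and> rk \<eta> = Some x \<and> (y,x) \<in> r0 - Id))}"
  define m where "m \<eta> = M (rk \<eta>) \<eta>" for \<eta>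
  define Ro where "Ro = inv_image (less_than <*lex*> (r0 - Id)) (\<lambda>a::'a option. (if a = None then 0::nat else 1, the a))"
  define S where "S = (\<Union>c\<in>Os. {(\<rho>,\<eta>). rk \<rho> = c \<and> rk \<eta> = c \<and> (\<rho>,\<eta>) \<in> R c})"
  have wfS: "wf S" unfolding S_def
  proof (rule wf_UN)
    fix c assume "c \<in> Os"
    have "wf (R c)" using RM'[OF \<open>c\<in>Os\<close>] by (simp add: PP_def)
    then show "wf {(\<rho>,\<eta>). rk \<rho> = c \<and> rk \<eta> = c \<and> (\<rho>,\<eta>) \<in> R c}" by (rule wf_subset) auto
  next
    fix i j assume "i\<in>Os" "j\<in>Os" "{(\<rho>,\<eta>). rk \<rho> = i \<and> rk \<eta> = i \<and> (\<rho>,\<eta>) \<in> R i} \<noteq> {(\<rho>,\<eta>). rk \<rho> = j \<and> rk \<eta> = j \<and> (\<rho>,\<eta>) \<in> R j}"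
    then have "i \<noteq> j" by auto
    then show "Domain {(\<rho>,\<eta>). rk \<rho> = i \<and> rk \<eta> = i \<and> (\<rho>,\<eta>) \<in> R i} \<inter> Range {(\<rho>,\<eta>). rk \<rho> = j \<and> rk \<eta> = j \<and> (\<rho>,\<eta>) \<in> R j} = {}"
      by auto
  qed
  have wfr: "wf r"
  proof -
    have "wf (inv_image (Ro <*lex*> S) (\<lambda>\<eta>. (rk \<eta>, \<eta>)))"
      unfolding Ro_def by (intro wf_inv_image wf_lex_prod wf_less_than wfr0 wfS)
    moreover have "r \<subseteq> inv_image (Ro <*lex*> S) (\<lambda>\<eta>. (rk \<eta>, \<eta>))"
    proof
      fix p assume "p \<in> r"
      then obtain \<rho> \<eta> where p: "p = (\<rho>,\<eta>)" and pr: "(\<rho>,\<eta>) \<in> r" by (cases p) auto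
      have "rk \<eta> \<in> Os" using inT pr by (auto simp: r_def)
      then show "p \<in> inv_image (Ro <*lex*> S) (\<lambda>\<eta>. (rk \<eta>, \<eta>))"
        using pr unfolding p by (auto simp: r_def Ro_def S_def)
    qed
    ultimately show ?thesis using wf_subset by blast
  qed
  have total: "\<forall>\<eta>\<in>?T. \<forall>\<rho>\<in>?T. \<eta> \<noteq> \<rho> \<longrightarrow> (\<eta>,\<rho>)\<in>r \<or> (\<rho>,\<eta>)\<in>r"
  proof (intro ballI impI)
    fix \<eta> \<rho> assume h: "\<eta> \<in> ?T" "\<rho> \<in> ?T" "\<eta> \<noteq> \<rho>"
    show "(\<eta>,\<rho>)\<in>r \<or> (\<rho>,\<eta>)\<in>r"
    proof (cases "rk \<eta> = rk \<rho>")
      case True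
      have a: "\<eta> \<in> Tset k (UU (rk \<rho>)) (uu (rk \<rho>))" "\<rho> \<in> Tset k (UU (rk \<rho>)) (uu (rk \<rho>))" "rk \<rho> \<in> Os"
        using inT[OF h(1)] inT[OF h(2)] True by auto
      then have "(\<eta>,\<rho>) \<in> R (rk \<rho>) \<or> (\<rho>,\<eta>) \<in> R (rk \<rho>)" using RM'[OF a(3)] h(3) unfolding PP_def by blast
      then show ?thesis using True h by (auto simp: r_def)
    next
      case False
      show ?thesis
      proof (cases "rk \<eta>")
        case None then show ?thesis using False h by (cases "rk \<rho>") (auto simp: r_def)
      next
        case (Some x)
        show ?thesis
        proof (cases "rk \<rho>")
          case None then show ?thesis using Some h by (auto simp: r_def)
        next
          case (Some y)
          with \<open>rk \<eta> = Some x\<close> False have "x \<noteq> y" by auto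
          have "x \<in> U" "y \<in> U" using \<open>rk \<eta> = Some x\<close> Some by (auto simp: rk_Some ismax_def)
          then have "(x,y) \<in> r0 \<or> (y,x) \<in> r0" using tot \<open>x\<noteq>y\<close> by (auto simp: total_on_def)
          then show ?thesis using \<open>x\<noteq>y\<close> h \<open>rk \<eta> = Some x\<close> Some by (auto simp: r_def)
        qed
      qed
    qed
  qed
  have props: "m \<eta> \<le> k \<and> covers u \<eta> (m \<eta>) \<and> finite {\<rho>\<in>?T. (\<rho>,\<eta>)\<in>r \<and> agree_off (m \<eta>) \<rho> \<eta>}" if "\<eta> \<in> ?T" for \<eta>
  proof -
    define c where "c = rk \<eta>"
    have c: "c \<in> Os" and \<eta>c: "\<eta> \<in> Tset k (UU c) (uu c)" using inT[OF that] by (auto simp: c_def)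
    have P: "M c \<eta> \<le> k \<and> covers (uu c) \<eta> (M c \<eta>) \<and> finite {\<rho>\<in>Tset k (UU c) (uu c). (\<rho>,\<eta>)\<in>R c \<and> agree_off (M c \<eta>) \<rho> \<eta>}"
      using RM'[OF c] \<eta>c unfolding PP_def by blast
    have mc: "m \<eta> = M c \<eta>" by (simp add: m_def c_def)
    have uu: "u \<subseteq> uu c" by (auto simp: uu_def split: option.split)
    have cov: "covers u \<eta> (m \<eta>)" using P uu mc by (auto simp: covers_def)
    have sub: "{\<rho>\<in>?T. (\<rho>,\<eta>)\<in>r \<and> agree_off (m \<eta>) \<rho> \<eta>} \<subseteq> {\<rho>\<in>Tset k (UU c) (uu c). (\<rho>,\<eta>)\<in>R c \<and> agree_off (M c \<eta>) \<rho> \<eta>}"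
    proof
      fix \<rho> assume "\<rho> \<in> {\<rho>\<in>?T. (\<rho>,\<eta>)\<in>r \<and> agree_off (m \<eta>) \<rho> \<eta>}"
      then have \<rho>: "\<rho> \<in> ?T" "(\<rho>,\<eta>) \<in> r" "agree_off (m \<eta>) \<rho> \<eta>" by auto
      have same: "rk \<rho> = rk \<eta>"
      proof (rule ccontr)
        assume ne: "rk \<rho> \<noteq> rk \<eta>"
        then have cc: "(rk \<rho> = None \<and> rk \<eta> \<noteq> None) \<or> (\<exists>x y. rk \<rho> = Some y \<and> rk \<eta> = Some x \<and> (y,x) \<in> r0 - Id)"
          using \<rho>(2) by (auto simp: r_def)
        obtain x where x: "rk \<eta> = Some x" using cc by auto
        have "x \<in> uu c" using x by (simp add: uu_def c_def)
        then obtain i where i: "i < length \<eta>" "i \<noteq> m \<eta>" "\<eta>!i = x" using P mc by (auto simp: covers_def)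
        then have "\<rho>!i = x" using \<rho>(3) by (auto simp: agree_off_def)
        moreover have "i < length \<rho>" using \<rho>(3) i by (simp add: agree_off_def)
        ultimately have x\<rho>: "x \<in> set \<rho>" by (metis nth_mem)
        have xU: "x \<in> U" using x by (simp add: rk_Some ismax_def)
        show False using cc
        proof
          assume "rk \<rho> = None \<and> rk \<eta> \<noteq> None" then show False using x\<rho> xU by (auto simp: rk_None)
        next
          assume "\<exists>x y. rk \<rho> = Some y \<and> rk \<eta> = Some x \<and> (y,x) \<in> r0 - Id"
          then obtain y where y: "rk \<rho> = Some y" "(y,x) \<in> r0" "y \<noteq> x" using x by auto
          then have "(x,y) \<in> r0" using x\<rho> xU by (simp add: rk_Some ismax_def)
          then show False using y antis unfolding antisym_def by blast
        qed
      qed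
      then have "(\<rho>,\<eta>) \<in> R c" using \<rho>(2) by (auto simp: r_def c_def)
      moreover have "\<rho> \<in> Tset k (UU c) (uu c)" using inT[OF \<rho>(1)] same by (simp add: c_def)
      ultimately show "\<rho> \<in> {\<rho>\<in>Tset k (UU c) (uu c). (\<rho>,\<eta>)\<in>R c \<and> agree_off (M c \<eta>) \<rho> \<eta>}" using \<rho>(3) mc by simp
    qed
    show ?thesis using P cov sub finite_subset mc by auto
  qed
  show ?case using wfr total props by blast
qed


lemma restr_length[simp]: "length (restr \<eta> m n) = length \<eta>"
  by (simp add: restr_def)

lemma restr_nth: "i < length \<eta> \<Longrightarrow> restr \<eta> m n ! i = (if i = m then Inr (map (\<eta>!i) [0..<n]) else Inl (\<eta>!i))"
  by (simp add: restr_def)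

lemma restr_eq:
  assumes "restr \<eta> m n = restr \<rho> m' n'" "m < length \<eta>" "m' < length \<rho>"
  shows "m = m' \<and> n = n' \<and> agree_off m \<rho> \<eta> \<and> (\<forall>i<n. (\<rho>!m) i = (\<eta>!m) i)"
proof -
  have len: "length \<rho> = length \<eta>" using arg_cong[OF assms(1), of length] by simp
  have e: "restr \<eta> m n ! i = restr \<rho> m' n' ! i" for i using assms(1) by simp
  have mm: "m = m'"
  proof (rule ccontr)
    assume ne: "m \<noteq> m'"
    have "restr \<eta> m n ! m = Inr (map (\<eta>!m) [0..<n])" using assms(2) by (simp add: restr_nth)
    moreover have "restr \<rho> m' n' ! m = Inl (\<rho>!m)" using assms(2) len ne by (simp add: restr_nth)
    ultimately show False using e[of m] by simp
  qed
  have mp: "map (\<eta>!m) [0..<n] = map (\<rho>!m) [0..<n']" using e[of m] assms(2) len mm by (simp add: restr_nth)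
  have nn: "n = n'" using arg_cong[OF mp, of length] by simp
  have pre: "(\<rho>!m) i = (\<eta>!m) i" if "i < n" for i
    using arg_cong[OF mp, of "\<lambda>xs. xs ! i"] that nn by simp
  have ag: "agree_off m \<rho> \<eta>"
    unfolding agree_off_def
  proof (intro conjI allI impI)
    show "length \<rho> = length \<eta>" by (rule len)
    fix i assume "i < length \<eta>" "i \<noteq> m"
    then show "\<rho>!i = \<eta>!i" using e[of i] len mm by (simp add: restr_nth)
  qed
  show ?thesis using mm nn ag pre by blast
qed

lemma single_cmul: "Poly_Mapping.single g c = frag_cmul c (frag_of g)"
  by (rule poly_mapping_eqI) (simp add: lookup_single)

lemma frag_cmul_diff2: "frag_cmul c (x - y) = frag_cmul c x - frag_cmul c y"
  by (rule poly_mapping_eqI) (simp add: lookup_minus algebra_simps)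

lemma kdiff: fixes x y :: "'a \<Rightarrow>\<^sub>0 int" shows "Poly_Mapping.keys x \<subseteq> A \<Longrightarrow> Poly_Mapping.keys y \<subseteq> A \<Longrightarrow> Poly_Mapping.keys (x - y) \<subseteq> A"
  using keys_diff[of x y] by blast
lemma kcmul: fixes x :: "'a \<Rightarrow>\<^sub>0 int" shows "Poly_Mapping.keys x \<subseteq> A \<Longrightarrow> Poly_Mapping.keys (frag_cmul c x) \<subseteq> A"
  using keys_cmul[of c x] by blast
lemma ksum: fixes f :: "'i \<Rightarrow> 'a \<Rightarrow>\<^sub>0 int" shows "(\<And>i. i \<in> I \<Longrightarrow> Poly_Mapping.keys (f i) \<subseteq> A) \<Longrightarrow> Poly_Mapping.keys (sum f I) \<subseteq> A"
  using keys_sum[of f I] by blast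

lemma rel_expand: "rel_elem k a \<eta> n = frag_cmul (int (fact n)) (frag_of (GY \<eta> (Suc n))) - frag_of (GY \<eta> n)
   - frag_cmul (a \<eta> n) (frag_of GZ) - (\<Sum>i\<le>k. frag_of (GX (restr \<eta> i n)))"
  by (simp only: rel_elem_def single_cmul[of "GY \<eta> (Suc n)" "int (fact n)"] single_cmul[of GZ "a \<eta> n"])

lemma fe_rel: "frag_extend \<phi> (rel_elem k a \<eta> n) = frag_cmul (int (fact n)) (\<phi> (GY \<eta> (Suc n))) - \<phi> (GY \<eta> n)
   - frag_cmul (a \<eta> n) (\<phi> GZ) - (\<Sum>i\<le>k. \<phi> (GX (restr \<eta> i n)))"
  by (simp add: rel_expand frag_extend_diff frag_extend_cmul frag_extend_sum o_def)

lemma rel_carrier: "\<eta> \<in> Lam \<Longrightarrow> rel_elem k a \<eta> n \<in> carrier (FG k Lam)"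
proof -
  assume \<eta>: "\<eta> \<in> Lam"
  have G: "GZ \<in> gens k Lam" "GY \<eta> n' \<in> gens k Lam" "i \<le> k \<Longrightarrow> GX (restr \<eta> i n) \<in> gens k Lam" for n' i
    using \<eta> by (auto simp: gens_def Lambda_le_def)
  have "Poly_Mapping.keys (rel_elem k a \<eta> n) \<subseteq> gens k Lam"
    unfolding rel_expand
    by (intro order.trans[OF keys_diff] Un_least order.trans[OF keys_cmul] order.trans[OF keys_sum] UN_least)
       (use G in auto)
  then show ?thesis by (simp add: FG_def)
qed

lemma Rel_sub: "subgroup (Rel k Lam a) (FG k Lam)"
proof -
  have "group (FG k Lam)" by (simp add: FG_def)
  moreover have "{rel_elem k a \<eta> n | \<eta> n. \<eta> \<in> Lam} \<subseteq> carrier (FG k Lam)" using rel_carrier by blast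
  ultimately show ?thesis unfolding Rel_def by (rule group.generate_is_subgroup)
qed

lemma Rel_carrier: "x \<in> Rel k Lam a \<Longrightarrow> x \<in> carrier (FG k Lam)"
  using Rel_sub subgroup.subset by blast

lemma Rel_0: "0 \<in> Rel k Lam a"
  using subgroup.one_closed[OF Rel_sub] by (simp add: FG_def)

lemma Rel_diff: "x \<in> Rel k Lam a \<Longrightarrow> y \<in> Rel k Lam a \<Longrightarrow> x - y \<in> Rel k Lam a"
proof -
  assume x: "x \<in> Rel k Lam a" and y: "y \<in> Rel k Lam a"
  have "inv\<^bsub>FG k Lam\<^esub> y \<in> Rel k Lam a" by (rule subgroup.m_inv_closed[OF Rel_sub y])
  moreover have "inv\<^bsub>FG k Lam\<^esub> y = - y" using Rel_carrier[OF y] by (simp add: FG_def)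
  ultimately have "- y \<in> Rel k Lam a" by simp
  then have "x \<otimes>\<^bsub>FG k Lam\<^esub> (- y) \<in> Rel k Lam a" by (rule subgroup.m_closed[OF Rel_sub x])
  then show ?thesis by (simp add: FG_def)
qed

lemma Rel_rel: "\<eta> \<in> Lam \<Longrightarrow> rel_elem k a \<eta> n \<in> Rel k Lam a"
  unfolding Rel_def by (rule generate.incl) blast

locale algctx =
  fixes k :: nat and Lam :: "'s tup set" and a :: "'s tup \<Rightarrow> nat \<Rightarrow> int"
    and U u :: "(nat \<Rightarrow> 's) set" and r :: "('s tup \<times> 's tup) set"
    and m :: "'s tup \<Rightarrow> nat" and N :: "'s tup \<Rightarrow> nat"
  assumes len: "\<And>\<eta>. \<eta> \<in> Lam \<Longrightarrow> length \<eta> = Suc k"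
    and disj: "U \<inter> u = {}" and finu: "finite u"
    and wfr: "wf r"
    and tot: "\<And>\<eta> \<rho>. \<eta> \<in> Tset k U u \<Longrightarrow> \<rho> \<in> Tset k U u \<Longrightarrow> \<eta> \<noteq> \<rho> \<Longrightarrow> (\<eta>,\<rho>) \<in> r \<or> (\<rho>,\<eta>) \<in> r"
    and mk: "\<And>\<eta>. \<eta> \<in> Tset k U u \<Longrightarrow> m \<eta> \<le> k \<and> covers u \<eta> (m \<eta>)"
    and Nprop: "\<And>\<eta> \<rho>. \<eta> \<in> Tset k U u \<Longrightarrow> \<rho> \<in> Tset k U u \<Longrightarrow> (\<rho>,\<eta>) \<in> r \<Longrightarrow> agree_off (m \<eta>) \<rho> \<eta>
        \<Longrightarrow> \<exists>i<N \<eta>. (\<rho>!m \<eta>) i \<noteq> (\<eta>!m \<eta>) i"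
begin

definition "Wset = U \<union> u"
definition "TW = {\<eta>\<in>Lam. set \<eta> \<subseteq> Wset}"
definition "TT = {\<eta>\<in>TW. u \<subseteq> set \<eta>}"
definition "nTT = TW - TT"
definition "gW = insert GZ ({GY \<eta> n | \<eta> n. \<eta> \<in> TW} \<union> {GX (restr \<eta> i n) | \<eta> i n. \<eta> \<in> TW \<and> i \<le> k})"
definition "KK = (if u = {} then {} else {GZ}) \<union> {GY \<eta> n | \<eta> n. \<eta> \<in> nTT} \<union> {GX (restr \<eta> i n) | \<eta> i n. \<eta> \<in> nTT \<and> i \<le> k}"
definition "EYg = {GY \<eta> n | \<eta> n. \<eta> \<in> TT \<and> n < N \<eta>}"
definition "EXg = {GX (restr \<eta> (m \<eta>) n) | \<eta> n. \<eta> \<in> TT \<and> N \<eta> \<le> n}"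
definition "EE = EYg \<union> EXg"
definition "Bg = gW - KK - EE"

lemma TT_Tset: "\<eta> \<in> TT \<Longrightarrow> \<eta> \<in> Tset k U u"
  by (auto simp: TT_def TW_def Tset_def Wset_def len)

lemma TT_TW: "\<eta> \<in> TT \<Longrightarrow> \<eta> \<in> TW" by (simp add: TT_def)

lemma TW_len: "\<eta> \<in> TW \<Longrightarrow> length \<eta> = Suc k" by (simp add: TW_def len)

lemma mTT: "\<eta> \<in> TT \<Longrightarrow> m \<eta> \<le> k" using mk TT_Tset by blast

lemma priv:
  assumes "\<eta> \<in> TT" "\<rho> \<in> TW" "i \<le> k" "N \<eta> \<le> n" "restr \<eta> (m \<eta>) n = restr \<rho> i n'"
  shows "\<rho> = \<eta> \<or> (\<rho> \<in> TT \<and> (\<eta>,\<rho>) \<in> r)"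
proof -
  have \<eta>T: "\<eta> \<in> Tset k U u" using assms(1) by (rule TT_Tset)
  have l\<eta>: "length \<eta> = Suc k" using assms(1) TT_TW TW_len by blast
  have l\<rho>: "length \<rho> = Suc k" using assms(2) TW_len by blast
  have mk\<eta>: "m \<eta> \<le> k" "covers u \<eta> (m \<eta>)" using mk[OF \<eta>T] by auto
  have re: "m \<eta> = i \<and> n = n' \<and> agree_off (m \<eta>) \<rho> \<eta> \<and> (\<forall>j<n. (\<rho>!m \<eta>) j = (\<eta>!m \<eta>) j)"
    by (rule restr_eq[OF assms(5)]) (use l\<eta> l\<rho> mk\<eta> assms(3) in auto)
  have cov: "u \<subseteq> set \<rho>"
  proof
    fix \<nu> assume "\<nu> \<in> u"
    then obtain j where j: "j < length \<eta>" "j \<noteq> m \<eta>" "\<eta>!j = \<nu>" using mk\<eta>(2) by (auto simp: covers_def)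
    then have "\<rho>!j = \<nu>" using re by (auto simp: agree_off_def)
    moreover have "j < length \<rho>" using j l\<eta> l\<rho> by simp
    ultimately show "\<nu> \<in> set \<rho>" by (metis nth_mem)
  qed
  have \<rho>TT: "\<rho> \<in> TT" using assms(2) cov by (simp add: TT_def)
  show ?thesis
  proof (cases "\<rho> = \<eta>")
    case False
    have "(\<eta>,\<rho>) \<in> r \<or> (\<rho>,\<eta>) \<in> r" using tot[OF \<eta>T TT_Tset[OF \<rho>TT]] False by auto
    moreover have "(\<rho>,\<eta>) \<notin> r"
    proof
      assume "(\<rho>,\<eta>) \<in> r"
      then obtain j where "j < N \<eta>" "(\<rho>!m \<eta>) j \<noteq> (\<eta>!m \<eta>) j"
        using Nprop[OF \<eta>T TT_Tset[OF \<rho>TT]] re by blast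
      then show False using re assms(4) by auto
    qed
    ultimately show ?thesis using \<rho>TT by auto
  qed simp
qed

definition "ownX p = (SOME \<eta>. \<eta> \<in> TT \<and> (\<exists>n. N \<eta> \<le> n \<and> p = restr \<eta> (m \<eta>) n))"
definition "lvl p = (SOME n. p = restr (ownX p) (m (ownX p)) n)"

lemma ownX:
  assumes "\<eta> \<in> TT" "N \<eta> \<le> n"
  shows "ownX (restr \<eta> (m \<eta>) n) = \<eta> \<and> lvl (restr \<eta> (m \<eta>) n) = n"
proof -
  let ?p = "restr \<eta> (m \<eta>) n"
  have o: "ownX ?p = \<eta>"
    unfolding ownX_def
  proof (rule some_equality)
    show "\<eta> \<in> TT \<and> (\<exists>n'. N \<eta> \<le> n' \<and> ?p = restr \<eta> (m \<eta>) n')" using assms by blast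
  next
    fix \<eta>' assume h: "\<eta>' \<in> TT \<and> (\<exists>n'. N \<eta>' \<le> n' \<and> ?p = restr \<eta>' (m \<eta>') n')"
    then obtain n' where n': "N \<eta>' \<le> n'" "?p = restr \<eta>' (m \<eta>') n'" by blast
    have hT: "\<eta>' \<in> TT" using h by blast
    have 1: "\<eta>' = \<eta> \<or> (\<eta>,\<eta>') \<in> r"
      using priv[OF assms(1) TT_TW[OF hT] mTT[OF hT] assms(2) n'(2)] by blast
    have 2: "\<eta> = \<eta>' \<or> (\<eta>',\<eta>) \<in> r"
      using priv[OF hT TT_TW[OF assms(1)] mTT[OF assms(1)] n'(1) n'(2)[symmetric]] by blast
    show "\<eta>' = \<eta>"
    proof (rule ccontr)
      assume "\<eta>' \<noteq> \<eta>"
      then have "(\<eta>,\<eta>') \<in> r" "(\<eta>',\<eta>) \<in> r" using 1 2 by auto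
      then show False using wf_asym[OF wfr] by blast
    qed
  qed
  have "lvl ?p = n"
    unfolding lvl_def o
  proof (rule some_equality)
    fix n' assume "?p = restr \<eta> (m \<eta>) n'"
    then show "n' = n" using restr_eq[of \<eta> "m \<eta>" n \<eta> "m \<eta>" n'] mTT[OF assms(1)] TW_len[OF TT_TW[OF assms(1)]] by auto
  qed simp
  then show ?thesis using o by simp
qed


definition "own g = (case g of GY \<eta> n \<Rightarrow> \<eta> | GX p \<Rightarrow> ownX p | GZ \<Rightarrow> undefined)"
definition "sec g = (case g of GY \<eta> n \<Rightarrow> N \<eta> - n | _ \<Rightarrow> 0)"
definition "Rg = {(g',g). g' \<in> EE \<and> g \<in> EE \<and> ((own g', own g) \<in> r \<or> (own g' = own g \<and> sec g' < sec g))}"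

lemma wf_Rg: "wf Rg"
proof -
  have "Rg \<subseteq> inv_image (r <*lex*> less_than) (\<lambda>g. (own g, sec g))" by (auto simp: Rg_def)
  then show ?thesis by (rule wf_subset[OF wf_inv_image[OF wf_lex_prod[OF wfr wf_less_than]]])
qed

lemma EYg_iff: "GY \<eta> n \<in> EE \<longleftrightarrow> \<eta> \<in> TT \<and> n < N \<eta>"
  by (auto simp: EE_def EYg_def EXg_def)
lemma GZ_notE: "GZ \<notin> EE"
  by (auto simp: EE_def EYg_def EXg_def)
lemma EXg_iff: "GX p \<in> EE \<longleftrightarrow> (\<exists>\<eta> n. \<eta> \<in> TT \<and> N \<eta> \<le> n \<and> p = restr \<eta> (m \<eta>) n)"
  by (auto simp: EE_def EYg_def EXg_def)

lemma dep_GX: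
  assumes "\<eta> \<in> TT" "i \<le> k" "GX (restr \<eta> i n) \<in> EE"
  shows "(ownX (restr \<eta> i n) = \<eta> \<and> i = m \<eta> \<and> N \<eta> \<le> n) \<or> (ownX (restr \<eta> i n), \<eta>) \<in> r"
proof -
  obtain \<rho> n' where \<rho>: "\<rho> \<in> TT" "N \<rho> \<le> n'" "restr \<eta> i n = restr \<rho> (m \<rho>) n'"
    using assms(3) EXg_iff by blast
  have o: "ownX (restr \<eta> i n) = \<rho>" using ownX[OF \<rho>(1,2)] \<rho>(3) by simp
  have "\<eta> = \<rho> \<or> (\<eta> \<in> TT \<and> (\<rho>,\<eta>) \<in> r)"
    using priv[OF \<rho>(1) TT_TW[OF assms(1)] assms(2) \<rho>(2) \<rho>(3)[symmetric]] .
  then show ?thesis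
  proof
    assume e: "\<eta> = \<rho>"
    have "i = m \<rho> \<and> n = n'"
      using restr_eq[OF \<rho>(3)] assms(2) mTT[OF \<rho>(1)] TW_len[OF TT_TW[OF assms(1)]] TW_len[OF TT_TW[OF \<rho>(1)]] by auto
    then show ?thesis using e o \<rho>(2) by auto
  qed (use o in auto)
qed

definition "base g = (if g \<in> Bg then frag_of g else 0)"
definition "ext \<phi> g = (if g \<in> EE then \<phi> g else base g)"
definition "Fb \<phi> g = (if g \<in> EE then (case g of
     GY \<eta> n \<Rightarrow> frag_cmul (int (fact n)) (ext \<phi> (GY \<eta> (Suc n))) - frag_cmul (a \<eta> n) (ext \<phi> GZ)
                 - (\<Sum>i\<le>k. ext \<phi> (GX (restr \<eta> i n)))
   | GX p \<Rightarrow> frag_cmul (int (fact (lvl p))) (ext \<phi> (GY (ownX p) (Suc (lvl p)))) - ext \<phi> (GY (ownX p) (lvl p))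
                 - frag_cmul (a (ownX p) (lvl p)) (ext \<phi> GZ)
                 - (\<Sum>i\<in>{..k}-{m (ownX p)}. ext \<phi> (GX (restr (ownX p) i (lvl p))))
   | GZ \<Rightarrow> 0) else 0)"
definition "ph = ext (wfrec Rg Fb)"

lemma adm: "adm_wf Rg Fb"
  unfolding adm_wf_def
proof (intro allI impI)
  fix f g :: "'s gen \<Rightarrow> 's gen \<Rightarrow>\<^sub>0 int" and x :: "'s gen"
  assume H: "\<forall>z. (z,x) \<in> Rg \<longrightarrow> f z = g z"
  have e: "ext f z = ext g z" if "z \<in> EE \<Longrightarrow> (z,x) \<in> Rg" for z using H that by (auto simp: ext_def)
  show "Fb f x = Fb g x"
  proof (cases "x \<in> EE")
    case False then show ?thesis by (simp add: Fb_def)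
  next
    case True
    show ?thesis
    proof (cases x)
      case GZ then show ?thesis using True by (simp add: GZ_notE)
    next
      case (GY \<eta> n)
      then have \<eta>n: "\<eta> \<in> TT" "n < N \<eta>" using True EYg_iff by auto
      have 1: "ext f (GY \<eta> (Suc n)) = ext g (GY \<eta> (Suc n))"
        by (rule e) (use \<eta>n GY True in \<open>auto simp: Rg_def EYg_iff own_def sec_def\<close>)
      have 2: "ext f GZ = ext g GZ" by (rule e) (simp add: GZ_notE)
      have 3: "ext f (GX (restr \<eta> i n)) = ext g (GX (restr \<eta> i n))" if "i \<le> k" for i
      proof (rule e)
        assume z: "GX (restr \<eta> i n) \<in> EE"
        from dep_GX[OF \<eta>n(1) that z] \<eta>n(2) have "(ownX (restr \<eta> i n), \<eta>) \<in> r" by auto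
        then show "(GX (restr \<eta> i n), x) \<in> Rg" using z True GY by (simp add: Rg_def own_def)
      qed
      have 4: "(\<Sum>i\<le>k. ext f (GX (restr \<eta> i n))) = (\<Sum>i\<le>k. ext g (GX (restr \<eta> i n)))"
        by (rule sum.cong) (auto simp: 3)
      show ?thesis using True GY 1 2 4 by (simp add: Fb_def)
    next
      case (GX p)
      then obtain \<eta> n where \<eta>n: "\<eta> \<in> TT" "N \<eta> \<le> n" "p = restr \<eta> (m \<eta>) n" using True EXg_iff by auto
      have o: "ownX p = \<eta>" "lvl p = n" using ownX[OF \<eta>n(1,2)] \<eta>n(3) by auto
      have 1: "ext f (GY \<eta> (Suc n)) = ext g (GY \<eta> (Suc n))"
        by (rule e) (use \<eta>n in \<open>simp add: EYg_iff\<close>)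
      have 5: "ext f (GY \<eta> n) = ext g (GY \<eta> n)"
        by (rule e) (use \<eta>n in \<open>simp add: EYg_iff\<close>)
      have 2: "ext f GZ = ext g GZ" by (rule e) (simp add: GZ_notE)
      have 3: "ext f (GX (restr \<eta> i n)) = ext g (GX (restr \<eta> i n))" if "i \<le> k" "i \<noteq> m \<eta>" for i
      proof (rule e)
        assume z: "GX (restr \<eta> i n) \<in> EE"
        from dep_GX[OF \<eta>n(1) that(1) z] that(2) have "(ownX (restr \<eta> i n), \<eta>) \<in> r" by auto
        then show "(GX (restr \<eta> i n), x) \<in> Rg" using z True GX o by (simp add: Rg_def own_def)
      qed
      have 4: "(\<Sum>i\<in>{..k}-{m \<eta>}. ext f (GX (restr \<eta> i n))) = (\<Sum>i\<in>{..k}-{m \<eta>}. ext g (GX (restr \<eta> i n)))"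
        by (rule sum.cong) (auto simp: 3)
      show ?thesis using True GX o 1 5 2 4 by (simp add: Fb_def)
    qed
  qed
qed

lemma ph_fix: "wfrec Rg Fb = Fb (wfrec Rg Fb)"
  by (rule wfrec_fixpoint[OF wf_Rg adm])

lemma ph_EY:
  assumes "\<eta> \<in> TT" "n < N \<eta>"
  shows "ph (GY \<eta> n) = frag_cmul (int (fact n)) (ph (GY \<eta> (Suc n))) - frag_cmul (a \<eta> n) (ph GZ)
                 - (\<Sum>i\<le>k. ph (GX (restr \<eta> i n)))"
proof -
  have E: "GY \<eta> n \<in> EE" using assms EYg_iff by auto
  have "ph (GY \<eta> n) = wfrec Rg Fb (GY \<eta> n)" using E by (simp add: ph_def ext_def)
  also have "\<dots> = Fb (wfrec Rg Fb) (GY \<eta> n)" by (rule fun_cong[OF ph_fix])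
  also have "\<dots> = frag_cmul (int (fact n)) (ph (GY \<eta> (Suc n))) - frag_cmul (a \<eta> n) (ph GZ)
                 - (\<Sum>i\<le>k. ph (GX (restr \<eta> i n)))" using E by (simp add: Fb_def ph_def)
  finally show ?thesis .
qed

lemma ph_EX:
  assumes "\<eta> \<in> TT" "N \<eta> \<le> n"
  shows "ph (GX (restr \<eta> (m \<eta>) n)) = frag_cmul (int (fact n)) (ph (GY \<eta> (Suc n))) - ph (GY \<eta> n)
                 - frag_cmul (a \<eta> n) (ph GZ) - (\<Sum>i\<in>{..k}-{m \<eta>}. ph (GX (restr \<eta> i n)))"
proof -
  have E: "GX (restr \<eta> (m \<eta>) n) \<in> EE" using assms EXg_iff by auto
  have o: "ownX (restr \<eta> (m \<eta>) n) = \<eta>" "lvl (restr \<eta> (m \<eta>) n) = n" using ownX[OF assms] by auto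
  have "ph (GX (restr \<eta> (m \<eta>) n)) = wfrec Rg Fb (GX (restr \<eta> (m \<eta>) n))" using E by (simp add: ph_def ext_def)
  also have "\<dots> = Fb (wfrec Rg Fb) (GX (restr \<eta> (m \<eta>) n))" by (rule fun_cong[OF ph_fix])
  also have "\<dots> = frag_cmul (int (fact n)) (ph (GY \<eta> (Suc n))) - ph (GY \<eta> n)
                 - frag_cmul (a \<eta> n) (ph GZ) - (\<Sum>i\<in>{..k}-{m \<eta>}. ph (GX (restr \<eta> i n)))"
    using E o by (simp add: Fb_def ph_def)
  finally show ?thesis .
qed

lemma ph_notE: "g \<notin> EE \<Longrightarrow> ph g = base g"
  by (simp add: ph_def ext_def)


end

context algctx begin
definition "refY \<eta> n = {GY \<eta> (Suc n), GZ} \<union> {GX (restr \<eta> i n) | i. i \<le> k}"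
definition "refX \<eta> n = {GY \<eta> (Suc n), GY \<eta> n, GZ} \<union> {GX (restr \<eta> i n) | i. i \<le> k \<and> i \<noteq> m \<eta>}"

lemma gen_induct:
  assumes B: "\<And>g. g \<notin> EE \<Longrightarrow> Q g"
    and SY: "\<And>\<eta> n. \<eta> \<in> TT \<Longrightarrow> n < N \<eta> \<Longrightarrow> (\<forall>z\<in>refY \<eta> n. Q z) \<Longrightarrow> Q (GY \<eta> n)"
    and SX: "\<And>\<eta> n. \<eta> \<in> TT \<Longrightarrow> N \<eta> \<le> n \<Longrightarrow> (\<forall>z\<in>refX \<eta> n. Q z) \<Longrightarrow> Q (GX (restr \<eta> (m \<eta>) n))"
  shows "Q g"
proof (induction g rule: wf_induct[OF wf_Rg])
  case (1 g)
  have IH: "Q z" if "(z,g) \<in> Rg \<or> z \<notin> EE" for z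
  proof (cases "z \<in> EE")
    case True then have "(z,g) \<in> Rg" using that by simp
    then show ?thesis using 1 by blast
  next
    case False then show ?thesis by (rule B)
  qed
  show ?case
  proof (cases "g \<in> EE")
    case False then show ?thesis by (rule B)
  next
    case True
    show ?thesis
    proof (cases g)
      case GZ then show ?thesis using True GZ_notE by simp
    next
      case (GY \<eta> n)
      then have \<eta>n: "\<eta> \<in> TT" "n < N \<eta>" using True EYg_iff by auto
      have "\<forall>z\<in>refY \<eta> n. Q z"
      proof
        fix z assume z: "z \<in> refY \<eta> n"
        show "Q z"
        proof (rule IH, rule disjCI)
          assume zE: "\<not> z \<notin> EE"
          then have zE: "z \<in> EE" by simp
          from z consider "z = GY \<eta> (Suc n)" | "z = GZ" | i where "i \<le> k" "z = GX (restr \<eta> i n)"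
            by (auto simp: refY_def)
          then show "(z,g) \<in> Rg"
          proof cases
            case 1 then show ?thesis using zE True GY \<eta>n by (auto simp: Rg_def own_def sec_def)
          next
            case 2 then show ?thesis using zE GZ_notE by simp
          next
            case (3 i)
            have zz: "GX (restr \<eta> i n) \<in> EE" using zE 3(2) by simp
            from dep_GX[OF \<eta>n(1) 3(1) zz] \<eta>n(2) have "(ownX (restr \<eta> i n), \<eta>) \<in> r" by auto
            then show ?thesis using zE True GY 3(2) by (simp add: Rg_def own_def)
          qed
        qed
      qed
      then show ?thesis using SY[OF \<eta>n] GY by simp
    next
      case (GX p)
      then obtain \<eta> n where \<eta>n: "\<eta> \<in> TT" "N \<eta> \<le> n" "p = restr \<eta> (m \<eta>) n" using True EXg_iff by auto
      have o: "ownX p = \<eta>" using ownX[OF \<eta>n(1,2)] \<eta>n(3) by auto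
      have "\<forall>z\<in>refX \<eta> n. Q z"
      proof
        fix z assume z: "z \<in> refX \<eta> n"
        show "Q z"
        proof (rule IH, rule disjCI)
          assume zE: "\<not> z \<notin> EE"
          then have zE: "z \<in> EE" by simp
          from z consider "z = GY \<eta> (Suc n)" | "z = GY \<eta> n" | "z = GZ" | i where "i \<le> k" "i \<noteq> m \<eta>" "z = GX (restr \<eta> i n)"
            by (auto simp: refX_def)
          then show "(z,g) \<in> Rg"
          proof cases
            case 1 then show ?thesis using zE \<eta>n by (simp add: EYg_iff)
          next
            case 2 then show ?thesis using zE \<eta>n by (simp add: EYg_iff)
          next
            case 3 then show ?thesis using zE GZ_notE by simp
          next
            case (4 i)
            have zz: "GX (restr \<eta> i n) \<in> EE" using zE 4(3) by simp
            from dep_GX[OF \<eta>n(1) 4(1) zz] 4(2) have "(ownX (restr \<eta> i n), \<eta>) \<in> r" by auto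
            then show ?thesis using zE True GX 4(3) o by (simp add: Rg_def own_def)
          qed
        qed
      qed
      then show ?thesis using SX[OF \<eta>n(1,2)] GX \<eta>n(3) by simp
    qed
  qed
qed

lemma keys_base: "Poly_Mapping.keys (base g) \<subseteq> Bg"
  by (simp add: base_def)

lemma ph_keys: "Poly_Mapping.keys (ph g) \<subseteq> Bg"
proof (induction g rule: gen_induct)
  case (1 g) then show ?case by (simp add: ph_notE keys_base)
next
  case (2 \<eta> n)
  have X: "Poly_Mapping.keys (ph (GX (restr \<eta> i n))) \<subseteq> Bg" if "i \<le> k" for i
  proof -
    have "GX (restr \<eta> i n) \<in> refY \<eta> n" using that by (auto simp: refY_def)
    then show ?thesis using 2(3) by blast
  qed
  have "GY \<eta> (Suc n) \<in> refY \<eta> n" "GZ \<in> refY \<eta> n" by (auto simp: refY_def)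
  then have Y: "Poly_Mapping.keys (ph (GY \<eta> (Suc n))) \<subseteq> Bg" "Poly_Mapping.keys (ph GZ) \<subseteq> Bg" using 2(3) by blast+
  show ?case unfolding ph_EY[OF 2(1,2)]
    by (intro kdiff kcmul ksum Y X) simp
next
  case (3 \<eta> n)
  have X: "Poly_Mapping.keys (ph (GX (restr \<eta> i n))) \<subseteq> Bg" if "i \<le> k" "i \<noteq> m \<eta>" for i
  proof -
    have "GX (restr \<eta> i n) \<in> refX \<eta> n" using that by (auto simp: refX_def)
    then show ?thesis using 3(3) by blast
  qed
  have "GY \<eta> (Suc n) \<in> refX \<eta> n" "GY \<eta> n \<in> refX \<eta> n" "GZ \<in> refX \<eta> n" by (auto simp: refX_def)
  then have Y: "Poly_Mapping.keys (ph (GY \<eta> (Suc n))) \<subseteq> Bg" "Poly_Mapping.keys (ph (GY \<eta> n)) \<subseteq> Bg" "Poly_Mapping.keys (ph GZ) \<subseteq> Bg"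
    using 3(3) by blast+
  show ?case unfolding ph_EX[OF 3(1,2)]
    by (intro kdiff kcmul ksum Y X) auto
qed

end

context algctx begin

definition "Jset = {kk + rr | kk rr. Poly_Mapping.keys kk \<subseteq> KK \<and> rr \<in> Rel k Lam a}"

lemma J0: "0 \<in> Jset"
  unfolding Jset_def using Rel_0 by force

lemma Jdiff: "x \<in> Jset \<Longrightarrow> y \<in> Jset \<Longrightarrow> x - y \<in> Jset"
proof -
  assume "x \<in> Jset" "y \<in> Jset"
  then obtain k1 r1 k2 r2 where h: "x = k1 + r1" "Poly_Mapping.keys k1 \<subseteq> KK" "r1 \<in> Rel k Lam a"
     "y = k2 + r2" "Poly_Mapping.keys k2 \<subseteq> KK" "r2 \<in> Rel k Lam a" unfolding Jset_def by blast
  have "x - y = (k1 - k2) + (r1 - r2)" using h by (simp add: algebra_simps)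
  moreover have "Poly_Mapping.keys (k1 - k2) \<subseteq> KK" using h by (intro kdiff)
  moreover have "r1 - r2 \<in> Rel k Lam a" using h Rel_diff by blast
  ultimately show ?thesis unfolding Jset_def by blast
qed

lemma Jadd: "x \<in> Jset \<Longrightarrow> y \<in> Jset \<Longrightarrow> x + y \<in> Jset"
proof -
  assume "x \<in> Jset" "y \<in> Jset"
  then have "x - (0 - y) \<in> Jset" using Jdiff J0 by blast
  then show ?thesis by simp
qed

lemma Jcmul: "x \<in> Jset \<Longrightarrow> frag_cmul c x \<in> Jset"
  by (rule frag_closure_minus_cmul[where P = "\<lambda>x. x \<in> Jset"]) (auto intro: J0 Jdiff)

lemma Jsum: "finite I \<Longrightarrow> (\<And>i. i \<in> I \<Longrightarrow> f i \<in> Jset) \<Longrightarrow> sum f I \<in> Jset"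
  by (induction I rule: finite_induct) (auto intro: J0 Jadd)

lemma JK: "g \<in> KK \<Longrightarrow> frag_of g \<in> Jset"
  unfolding Jset_def using Rel_0 by (intro CollectI exI[of _ "frag_of g"] exI[of _ 0]) auto

lemma JR: "rr \<in> Rel k Lam a \<Longrightarrow> rr \<in> Jset"
  unfolding Jset_def by (intro CollectI exI[of _ 0] exI[of _ rr]) auto

lemma KK_notE: "g \<in> KK \<Longrightarrow> g \<notin> EE"
proof
  assume g: "g \<in> KK" and gE: "g \<in> EE"
  show False
  proof (cases g)
    case GZ then show ?thesis using gE GZ_notE by simp
  next
    case (GY \<eta> n)
    then have "\<eta> \<in> nTT" using g by (auto simp: KK_def split: if_splits)
    moreover have "\<eta> \<in> TT" using gE GY EYg_iff by simp
    ultimately show ?thesis by (simp add: nTT_def)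
  next
    case (GX p)
    then obtain \<eta> i n where \<eta>: "\<eta> \<in> nTT" "i \<le> k" "p = restr \<eta> i n" using g by (auto simp: KK_def split: if_splits)
    obtain \<rho> n' where \<rho>: "\<rho> \<in> TT" "N \<rho> \<le> n'" "p = restr \<rho> (m \<rho>) n'" using gE GX EXg_iff by blast
    have "\<eta> \<in> TW" using \<eta>(1) by (simp add: nTT_def)
    have e: "restr \<rho> (m \<rho>) n' = restr \<eta> i n" using \<rho>(3) \<eta>(3) by simp
    from priv[OF \<rho>(1) \<open>\<eta> \<in> TW\<close> \<eta>(2) \<rho>(2) e] \<rho>(1) have "\<eta> \<in> TT" by auto
    then show ?thesis using \<eta>(1) by (simp add: nTT_def)
  qed
qed

lemma ph_KK: "g \<in> KK \<Longrightarrow> ph g = 0"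
  using KK_notE by (simp add: ph_notE base_def Bg_def)

lemma gW_mem:
  assumes "\<eta> \<in> TW"
  shows "GZ \<in> gW" "GY \<eta> n \<in> gW" "i \<le> k \<Longrightarrow> GX (restr \<eta> i n) \<in> gW"
  using assms by (auto simp: gW_def)

lemma ph_J: "g \<in> gW \<Longrightarrow> frag_of g - ph g \<in> Jset"
proof (induction g rule: gen_induct)
  case (1 g)
  show ?case
  proof (cases "g \<in> KK")
    case True then show ?thesis using ph_KK JK by simp
  next
    case False
    then have "g \<in> Bg" using 1 by (simp add: Bg_def)
    then show ?thesis using 1 by (simp add: ph_notE base_def J0)
  qed
next
  case (2 \<eta> n)
  have TW: "\<eta> \<in> TW" using 2(1) by (rule TT_TW)
  define D where "D g = frag_of g - ph g" for g
  have DY: "D (GY \<eta> (Suc n)) \<in> Jset" "D GZ \<in> Jset"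
    using 2(3) gW_mem[OF TW] unfolding D_def by (auto simp: refY_def)
  have DX: "D (GX (restr \<eta> i n)) \<in> Jset" if "i \<le> k" for i
  proof -
    have "GX (restr \<eta> i n) \<in> refY \<eta> n" using that by (auto simp: refY_def)
    then show ?thesis using 2(3) gW_mem[OF TW] that unfolding D_def by blast
  qed
  have eq: "frag_of (GY \<eta> n) - ph (GY \<eta> n) = frag_cmul (int (fact n)) (D (GY \<eta> (Suc n))) - frag_cmul (a \<eta> n) (D GZ)
      - (\<Sum>i\<le>k. D (GX (restr \<eta> i n))) - rel_elem k a \<eta> n"
    unfolding ph_EY[OF 2(1,2)] rel_expand D_def
    by (simp add: frag_cmul_diff2 sum_subtractf algebra_simps)
  have "rel_elem k a \<eta> n \<in> Jset" using TW by (intro JR Rel_rel) (simp add: TW_def)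
  then show ?case unfolding eq
    by (intro Jdiff Jcmul Jsum DY DX) auto
next
  case (3 \<eta> n)
  have TW: "\<eta> \<in> TW" using 3(1) by (rule TT_TW)
  have mk': "m \<eta> \<le> k" using 3(1) by (rule mTT)
  define D where "D g = frag_of g - ph g" for g
  have DY: "D (GY \<eta> (Suc n)) \<in> Jset" "D (GY \<eta> n) \<in> Jset" "D GZ \<in> Jset"
    using 3(3) gW_mem[OF TW] unfolding D_def by (auto simp: refX_def)
  have DX: "D (GX (restr \<eta> i n)) \<in> Jset" if "i \<in> {..k} - {m \<eta>}" for i
  proof -
    have "GX (restr \<eta> i n) \<in> refX \<eta> n" using that by (auto simp: refX_def)
    then show ?thesis using 3(3) gW_mem[OF TW] that unfolding D_def by auto
  qed
  have sp: "(\<Sum>i\<le>k. f i) = f (m \<eta>) + (\<Sum>i\<in>{..k}-{m \<eta>}. f i)" for f :: "nat \<Rightarrow> 's gen \<Rightarrow>\<^sub>0 int"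
    using mk' by (simp add: sum.remove)
  have eq: "frag_of (GX (restr \<eta> (m \<eta>) n)) - ph (GX (restr \<eta> (m \<eta>) n)) = frag_cmul (int (fact n)) (D (GY \<eta> (Suc n)))
      - D (GY \<eta> n) - frag_cmul (a \<eta> n) (D GZ)
      - (\<Sum>i\<in>{..k}-{m \<eta>}. D (GX (restr \<eta> i n))) - rel_elem k a \<eta> n"
    unfolding ph_EX[OF 3(1,2)] rel_expand D_def sp[of "\<lambda>i. frag_of (GX (restr \<eta> i n))"]
    by (simp add: frag_cmul_diff2 sum_subtractf algebra_simps)
  have "rel_elem k a \<eta> n \<in> Jset" using TW by (intro JR Rel_rel) (simp add: TW_def)
  then show ?case unfolding eq
    by (intro Jdiff Jcmul Jsum DY DX) auto
qed

lemma psi_rel: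
  assumes "\<eta> \<in> TW"
  shows "frag_extend ph (rel_elem k a \<eta> n) = 0"
proof (cases "\<eta> \<in> TT")
  case False
  then have nT: "\<eta> \<in> nTT" using assms by (simp add: nTT_def)
  then have "u \<noteq> {}" using assms False by (auto simp: TT_def)
  then have K: "GZ \<in> KK" "GY \<eta> n' \<in> KK" "i \<le> k \<Longrightarrow> GX (restr \<eta> i n) \<in> KK" for n' i
    using nT by (auto simp: KK_def)
  show ?thesis unfolding fe_rel by (simp add: ph_KK K)
next
  case True
  show ?thesis
  proof (cases "n < N \<eta>")
    case True': True
    show ?thesis unfolding fe_rel ph_EY[OF True True'] by simp
  next
    case False
    then have Nn: "N \<eta> \<le> n" by simp
    have mk': "m \<eta> \<le> k" using True by (rule mTT)
    have sp: "(\<Sum>i\<le>k. ph (GX (restr \<eta> i n))) = ph (GX (restr \<eta> (m \<eta>) n)) + (\<Sum>i\<in>{..k}-{m \<eta>}. ph (GX (restr \<eta> i n)))"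
      using mk' by (simp add: sum.remove)
    show ?thesis unfolding fe_rel sp ph_EX[OF True Nn] by simp
  qed
qed

end


lemma fe_compose: "frag_extend g (frag_extend b x) = frag_extend (\<lambda>i. frag_extend g (b i)) x"
proof -
  have "frag_extend g (frag_extend b x) = frag_extend g (\<Sum>i\<in>Poly_Mapping.keys x. frag_cmul (Poly_Mapping.lookup x i) (b i))"
    by (simp add: frag_extend_def)
  also have "\<dots> = (\<Sum>i\<in>Poly_Mapping.keys x. frag_cmul (Poly_Mapping.lookup x i) (frag_extend g (b i)))"
    by (simp add: frag_extend_sum frag_extend_cmul o_def)
  also have "\<dots> = frag_extend (\<lambda>i. frag_extend g (b i)) x" by (simp add: frag_extend_def)
  finally show ?thesis .
qed

lemma lookup_fe: "Poly_Mapping.lookup (frag_extend b t) x = (\<Sum>i\<in>Poly_Mapping.keys t. Poly_Mapping.lookup t i * Poly_Mapping.lookup (b i) x)"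
  by (simp add: frag_extend_def lookup_sum)

lemma sum_delta_keys: "(\<Sum>p\<in>Poly_Mapping.keys t. Poly_Mapping.lookup t p * (if p = q then c else 0)) = Poly_Mapping.lookup t q * (c::int)"
proof -
  have "(\<Sum>p\<in>Poly_Mapping.keys t. Poly_Mapping.lookup t p * (if p = q then c else 0))
      = (\<Sum>p\<in>Poly_Mapping.keys t. if p = q then Poly_Mapping.lookup t p * c else 0)"
    by (rule sum.cong) auto
  also have "\<dots> = (if q \<in> Poly_Mapping.keys t then Poly_Mapping.lookup t q * c else 0)"
    by (simp add: sum.delta')
  also have "\<dots> = Poly_Mapping.lookup t q * c" by (auto simp: in_keys_iff)
  finally show ?thesis .
qed

lemma lookup_rel_GY:
  "Poly_Mapping.lookup (rel_elem k a \<eta>' n') (GY \<eta> n) =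
     (if (\<eta>', n') = (\<eta>, n - 1) \<and> n > 0 then int (fact (n - 1)) else 0) - (if (\<eta>', n') = (\<eta>, n) then 1 else 0)"
  by (auto simp: rel_elem_def lookup_minus lookup_sum lookup_single when_def)

lemma coef_GY:
  fixes t :: "('s tup \<times> nat) \<Rightarrow>\<^sub>0 int"
  shows "Poly_Mapping.lookup (frag_extend (\<lambda>(\<eta>,n). rel_elem k a \<eta> n) t) (GY \<eta> n) =
     (if n > 0 then Poly_Mapping.lookup t (\<eta>, n - 1) * int (fact (n - 1)) else 0) - Poly_Mapping.lookup t (\<eta>, n)"
proof -
  have "Poly_Mapping.lookup (frag_extend (\<lambda>(\<eta>,n). rel_elem k a \<eta> n) t) (GY \<eta> n)
     = (\<Sum>p\<in>Poly_Mapping.keys t. Poly_Mapping.lookup t p * (if p = (\<eta>, n - 1) then (if n > 0 then int (fact (n - 1)) else 0) else 0))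
     - (\<Sum>p\<in>Poly_Mapping.keys t. Poly_Mapping.lookup t p * (if p = (\<eta>, n) then 1 else 0))"
    unfolding lookup_fe sum_subtractf[symmetric]
    by (rule sum.cong) (auto simp: lookup_rel_GY algebra_simps split: prod.splits)
  also have "\<dots> = (if n > 0 then Poly_Mapping.lookup t (\<eta>, n - 1) * int (fact (n - 1)) else 0) - Poly_Mapping.lookup t (\<eta>, n)"
    unfolding sum_delta_keys by simp
  finally show ?thesis .
qed

lemma coef_zero:
  fixes t :: "('s tup \<times> nat) \<Rightarrow>\<^sub>0 int"
  assumes "\<And>n. Poly_Mapping.lookup (frag_extend (\<lambda>(\<eta>,n). rel_elem k a \<eta> n) t) (GY \<eta> n) = 0"
  shows "Poly_Mapping.lookup t (\<eta>, n) = 0"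
proof (induction n)
  case 0 then show ?case using assms[of 0] coef_GY[of k a t \<eta> 0] by simp
next
  case (Suc n) then show ?case using assms[of "Suc n"] coef_GY[of k a t \<eta> "Suc n"] by simp
qed

lemma Rel_combo:
  assumes "f \<in> Rel k Lam a"
  shows "\<exists>t. Poly_Mapping.keys t \<subseteq> Lam \<times> UNIV \<and> f = frag_extend (\<lambda>(\<eta>,n). rel_elem k a \<eta> n) t"
  using assms unfolding Rel_def
proof (induction rule: generate.induct)
  case one
  then show ?case by (intro exI[of _ 0]) (simp add: FG_def)
next
  case (incl h)
  then obtain \<eta> n where h: "h = rel_elem k a \<eta> n" "\<eta> \<in> Lam" by blast
  then show ?case by (intro exI[of _ "frag_of (\<eta>,n)"]) simp
next
  case (inv h)
  then obtain \<eta> n where h: "h = rel_elem k a \<eta> n" "\<eta> \<in> Lam" by blast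
  have "inv\<^bsub>FG k Lam\<^esub> h = - h" using rel_carrier[OF h(2)] h(1) by (simp add: FG_def)
  then show ?case using h by (intro exI[of _ "- frag_of (\<eta>,n)"]) (simp add: frag_extend_minus)
next
  case (eng h1 h2)
  then obtain t1 t2 where t: "Poly_Mapping.keys t1 \<subseteq> Lam \<times> UNIV" "h1 = frag_extend (\<lambda>(\<eta>,n). rel_elem k a \<eta> n) t1"
    "Poly_Mapping.keys t2 \<subseteq> Lam \<times> UNIV" "h2 = frag_extend (\<lambda>(\<eta>,n). rel_elem k a \<eta> n) t2" by blast
  have "Poly_Mapping.keys (t1 + t2) \<subseteq> Lam \<times> UNIV" using t keys_add[of t1 t2] by blast
  then show ?case using t by (intro exI[of _ "t1 + t2"]) (simp add: FG_def frag_extend_add)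
qed

context algctx begin

lemma psi_kill:
  assumes f: "f \<in> Rel k Lam a" and kf: "Poly_Mapping.keys f \<subseteq> gW"
  shows "frag_extend ph f = 0"
proof -
  obtain t where t: "Poly_Mapping.keys t \<subseteq> Lam \<times> UNIV" "f = frag_extend (\<lambda>(\<eta>,n). rel_elem k a \<eta> n) t"
    using Rel_combo[OF f] by blast
  have inTW: "\<eta> \<in> TW" if p: "(\<eta>,n) \<in> Poly_Mapping.keys t" for \<eta> n
  proof (rule ccontr)
    assume nTW: "\<eta> \<notin> TW"
    have "GY \<eta> n' \<notin> gW" for n' using nTW by (auto simp: gW_def)
    then have "Poly_Mapping.lookup f (GY \<eta> n') = 0" for n' using kf by (auto simp: in_keys_iff)
    then have "Poly_Mapping.lookup t (\<eta>, n) = 0" using coef_zero[of k a t \<eta> n] t(2) by simp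
    then show False using p by (simp add: in_keys_iff)
  qed
  have "frag_extend ph f = frag_extend (\<lambda>p. frag_extend ph ((\<lambda>(\<eta>,n). rel_elem k a \<eta> n) p)) t"
    unfolding t(2) by (rule fe_compose)
  also have "\<dots> = 0"
  proof (rule frag_extend_eq_0)
    fix p assume "p \<in> Poly_Mapping.keys t"
    then obtain \<eta> n where "p = (\<eta>,n)" "\<eta> \<in> TW" using inTW by (cases p) auto
    then show "frag_extend ph ((\<lambda>(\<eta>,n). rel_elem k a \<eta> n) p) = 0" using psi_rel by simp
  qed
  finally show ?thesis .
qed

end


definition spanS :: "'a set \<Rightarrow> ('a \<Rightarrow>\<^sub>0 int) set" where "spanS X = {f. Poly_Mapping.keys f \<subseteq> X}"

lemma mem_spanS[simp]: "f \<in> spanS X \<longleftrightarrow> Poly_Mapping.keys f \<subseteq> X"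
  by (simp add: spanS_def)

lemma span_sub:
  assumes "X \<subseteq> gens k Lam"
  shows "subgroup (spanS X) (FG k Lam)"
proof -
  interpret G: group "FG k Lam" by (simp add: FG_def)
  show ?thesis
  proof (rule G.subgroupI)
    show "spanS X \<subseteq> carrier (FG k Lam)" using assms by (auto simp: FG_def)
    have "0 \<in> spanS X" by simp
    then show "spanS X \<noteq> {}" by blast
  next
    fix x assume "x \<in> spanS X"
    then show "inv\<^bsub>FG k Lam\<^esub> x \<in> spanS X" using assms by (auto simp: FG_def)
  next
    fix x y assume "x \<in> spanS X" "y \<in> spanS X"
    then show "x \<otimes>\<^bsub>FG k Lam\<^esub> y \<in> spanS X" using keys_add[of x y] by (auto simp: FG_def)
  qed
qed

lemma span_gen:
  assumes X: "X \<subseteq> gens k Lam"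
  shows "generate (FG k Lam) (frag_of ` X) = spanS X"
proof
  interpret G: group "FG k Lam" by (simp add: FG_def)
  show "generate (FG k Lam) (frag_of ` X) \<subseteq> spanS X"
    by (rule G.generate_subgroup_incl[OF _ span_sub[OF X]]) auto
  show "spanS X \<subseteq> generate (FG k Lam) (frag_of ` X)"
  proof
    fix f assume "f \<in> spanS X"
    then have kf: "Poly_Mapping.keys f \<subseteq> X" by simp
    have sub: "subgroup (generate (FG k Lam) (frag_of ` X)) (FG k Lam)"
      by (rule G.generate_is_subgroup) (use X in \<open>auto simp: FG_def\<close>)
    show "f \<in> generate (FG k Lam) (frag_of ` X)"
      using kf
    proof (induction f rule: frag_induction)
      case zero
      have "\<one>\<^bsub>FG k Lam\<^esub> \<in> generate (FG k Lam) (frag_of ` X)" by (rule generate.one)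
      then show ?case by (simp add: FG_def)
    next
      case (one x)
      then show ?case by (intro generate.incl) auto
    next
      case (diff a b)
      have bc: "b \<in> carrier (FG k Lam)" using diff(2) subgroup.subset[OF sub] by blast
      have "inv\<^bsub>FG k Lam\<^esub> b \<in> generate (FG k Lam) (frag_of ` X)" by (rule subgroup.m_inv_closed[OF sub diff(2)])
      then have "a \<otimes>\<^bsub>FG k Lam\<^esub> inv\<^bsub>FG k Lam\<^esub> b \<in> generate (FG k Lam) (frag_of ` X)"
        by (rule subgroup.m_closed[OF sub diff(1)])
      moreover have "inv\<^bsub>FG k Lam\<^esub> b = - b" using bc by (simp add: FG_def)
      ultimately show ?case by (simp add: FG_def)
    qed
  qed
qed

lemma gen_union_span:
  assumes "\<And>i. i \<in> I \<Longrightarrow> A i \<subseteq> gens k Lam"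
  shows "generate (FG k Lam) (\<Union>i\<in>I. spanS (A i)) = spanS (\<Union>i\<in>I. A i)"
proof
  interpret G: group "FG k Lam" by (simp add: FG_def)
  have U: "(\<Union>i\<in>I. A i) \<subseteq> gens k Lam" using assms by blast
  show "generate (FG k Lam) (\<Union>i\<in>I. spanS (A i)) \<subseteq> spanS (\<Union>i\<in>I. A i)"
    by (rule G.generate_subgroup_incl[OF _ span_sub[OF U]]) fastforce
  have "spanS (\<Union>i\<in>I. A i) = generate (FG k Lam) (frag_of ` (\<Union>i\<in>I. A i))"
    using span_gen[OF U] by simp
  also have "\<dots> \<subseteq> generate (FG k Lam) (\<Union>i\<in>I. spanS (A i))"
    by (rule G.mono_generate) auto
  finally show "spanS (\<Union>i\<in>I. A i) \<subseteq> generate (FG k Lam) (\<Union>i\<in>I. spanS (A i))" .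
qed

definition "piF k Lam a f = r_coset (FG k Lam) (Rel k Lam a) f"

lemma F_comm: "comm_group (FG k Lam)"
  by (simp add: FG_def abelian_free_Abelian_group)

lemma Rel_normal: "normal (Rel k Lam a) (FG k Lam)"
  by (rule comm_group.subgroup_imp_normal[OF F_comm Rel_sub])

lemma Gx_group: "group (Gx k Lam a)"
  unfolding Gx_def by (rule normal.factorgroup_is_group[OF Rel_normal])

lemma pi_hom: "piF k Lam a \<in> hom (FG k Lam) (Gx k Lam a)"
proof -
  have "piF k Lam a = r_coset (FG k Lam) (Rel k Lam a)" by (rule ext) (simp add: piF_def)
  then show ?thesis using normal.r_coset_hom_Mod[OF Rel_normal[of k Lam a]] unfolding Gx_def by simp
qed

lemma pi_ghom: "group_hom (FG k Lam) (Gx k Lam a) (piF k Lam a)"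
  unfolding group_hom_def group_hom_axioms_def using pi_hom[of k Lam a] Gx_group[of k Lam a] by (simp add: FG_def)

definition "gV k Lam V = insert GZ ({GY \<eta> n | \<eta> n. \<eta> \<in> Lam \<and> set \<eta> \<subseteq> V} \<union> {GX (restr \<eta> i n) | \<eta> i n. \<eta> \<in> Lam \<and> set \<eta> \<subseteq> V \<and> i \<le> k})"

lemma gV_sub: "gV k Lam V \<subseteq> gens k Lam"
proof
  fix g assume g: "g \<in> gV k Lam V"
  show "g \<in> gens k Lam"
  proof (cases g)
    case GZ then show ?thesis by (simp add: gens_def)
  next
    case (GY \<eta> n) then show ?thesis using g by (auto simp: gV_def gens_def)
  next
    case (GX p)
    then obtain \<eta> i n where "p = restr \<eta> i n" "\<eta> \<in> Lam" "i \<le> k" using g by (auto simp: gV_def)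
    then have "p \<in> Lambda_le k Lam" unfolding Lambda_le_def by blast
    then show ?thesis using GX by (simp add: gens_def)
  qed
qed

lemma G_U_eq: "G_U k Lam a V = piF k Lam a ` spanS (gV k Lam V)"
proof -
  have S: "{gimg k Lam a GZ} \<union> {gimg k Lam a (GY \<eta> n) | \<eta> n. \<eta> \<in> Lam \<and> set \<eta> \<subseteq> V}
      \<union> {gimg k Lam a (GX (restr \<eta> m n)) | \<eta> m n. \<eta> \<in> Lam \<and> set \<eta> \<subseteq> V \<and> m \<le> k}
      = piF k Lam a ` (frag_of ` gV k Lam V)"
    unfolding gimg_def piF_def gV_def by blast
  have "G_U k Lam a V = generate (Gx k Lam a) (piF k Lam a ` (frag_of ` gV k Lam V))"
    unfolding G_U_def S ..
  also have "\<dots> = piF k Lam a ` generate (FG k Lam) (frag_of ` gV k Lam V)"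
    by (rule group_hom.generate_img[OF pi_ghom]) (use gV_sub[of k Lam V] in \<open>auto simp: FG_def\<close>)
  also have "\<dots> = piF k Lam a ` spanS (gV k Lam V)"
    by (simp add: span_gen[OF gV_sub])
  finally show ?thesis .
qed

context algctx begin

lemma gW_gV: "gW = gV k Lam Wset"
  by (auto simp: gW_def gV_def TW_def)

lemma H_eq: "G_U k Lam a Wset = piF k Lam a ` spanS gW"
  by (simp add: G_U_eq gW_gV)

lemma tup_iff: "(\<exists>\<nu>\<in>u. set \<eta> \<subseteq> U \<union> (u - {\<nu>})) \<longleftrightarrow> set \<eta> \<subseteq> Wset \<and> \<not> u \<subseteq> set \<eta>"
  using disj by (auto simp: Wset_def)

lemma union_gV_KK: "(\<Union>\<nu>\<in>u. gV k Lam (U \<union> (u - {\<nu>}))) = KK"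
proof (cases "u = {}")
  case True
  have "nTT = {}" unfolding nTT_def TT_def using True by auto
  then have "KK = {}" unfolding KK_def using True by simp
  then show ?thesis using True by simp
next
  case False
  have nT: "\<eta> \<in> nTT \<longleftrightarrow> \<eta> \<in> Lam \<and> (\<exists>\<nu>\<in>u. set \<eta> \<subseteq> U \<union> (u - {\<nu>}))" for \<eta>
    unfolding tup_iff by (auto simp: nTT_def TT_def TW_def)
  have gVm: "g \<in> gV k Lam V \<longleftrightarrow> g = GZ \<or> (\<exists>\<eta> n. g = GY \<eta> n \<and> \<eta> \<in> Lam \<and> set \<eta> \<subseteq> V)
      \<or> (\<exists>\<eta> i n. g = GX (restr \<eta> i n) \<and> \<eta> \<in> Lam \<and> set \<eta> \<subseteq> V \<and> i \<le> k)" for g V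
    by (auto simp: gV_def)
  have KKm: "g \<in> KK \<longleftrightarrow> g = GZ \<or> (\<exists>\<eta> n. g = GY \<eta> n \<and> \<eta> \<in> nTT)
      \<or> (\<exists>\<eta> i n. g = GX (restr \<eta> i n) \<and> \<eta> \<in> nTT \<and> i \<le> k)" for g
    using False by (auto simp: KK_def)
  obtain \<nu>0 where \<nu>0: "\<nu>0 \<in> u" using False by blast
  have "g \<in> (\<Union>\<nu>\<in>u. gV k Lam (U \<union> (u - {\<nu>}))) \<longleftrightarrow> g \<in> KK" for g
  proof
    assume "g \<in> (\<Union>\<nu>\<in>u. gV k Lam (U \<union> (u - {\<nu>})))"
    then obtain \<nu> where \<nu>: "\<nu> \<in> u" "g \<in> gV k Lam (U \<union> (u - {\<nu>}))" by blast
    from \<nu>(2)[unfolded gVm] show "g \<in> KK"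
    proof (elim disjE exE conjE)
      assume "g = GZ" then show ?thesis unfolding KKm by simp
    next
      fix \<eta> n assume h: "g = GY \<eta> n" "\<eta> \<in> Lam" "set \<eta> \<subseteq> U \<union> (u - {\<nu>})"
      have "\<eta> \<in> nTT" unfolding nT using \<nu>(1) h(2,3) by blast
      then show ?thesis unfolding KKm using h(1) by blast
    next
      fix \<eta> i n assume h: "g = GX (restr \<eta> i n)" "\<eta> \<in> Lam" "set \<eta> \<subseteq> U \<union> (u - {\<nu>})" "i \<le> k"
      have "\<eta> \<in> nTT" unfolding nT using \<nu>(1) h(2,3) by blast
      then show ?thesis unfolding KKm using h(1,4) by blast
    qed
  next
    assume "g \<in> KK"
    from this[unfolded KKm] show "g \<in> (\<Union>\<nu>\<in>u. gV k Lam (U \<union> (u - {\<nu>})))"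
    proof (elim disjE exE conjE)
      assume "g = GZ"
      then have "g \<in> gV k Lam (U \<union> (u - {\<nu>0}))" unfolding gVm by simp
      then show ?thesis using \<nu>0 by blast
    next
      fix \<eta> n assume h: "g = GY \<eta> n" "\<eta> \<in> nTT"
      then obtain \<nu> where \<nu>: "\<nu> \<in> u" "set \<eta> \<subseteq> U \<union> (u - {\<nu>})" "\<eta> \<in> Lam" unfolding nT by blast
      then have "g \<in> gV k Lam (U \<union> (u - {\<nu>}))" unfolding gVm using h(1) by blast
      then show ?thesis using \<nu>(1) by blast
    next
      fix \<eta> i n assume h: "g = GX (restr \<eta> i n)" "\<eta> \<in> nTT" "i \<le> k"
      then obtain \<nu> where \<nu>: "\<nu> \<in> u" "set \<eta> \<subseteq> U \<union> (u - {\<nu>})" "\<eta> \<in> Lam" unfolding nT by blast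
      then have "g \<in> gV k Lam (U \<union> (u - {\<nu>}))" unfolding gVm using h(1,3) by blast
      then show ?thesis using \<nu>(1) by blast
    qed
  qed
  then show ?thesis by blast
qed

lemma N_eq: "G_Uu k Lam a U u = piF k Lam a ` spanS KK"
proof -
  have "G_Uu k Lam a U u = generate (Gx k Lam a) (piF k Lam a ` (\<Union>\<nu>\<in>u. spanS (gV k Lam (U \<union> (u - {\<nu>})))))"
    unfolding G_Uu_def G_U_eq image_UN ..
  also have "\<dots> = piF k Lam a ` generate (FG k Lam) (\<Union>\<nu>\<in>u. spanS (gV k Lam (U \<union> (u - {\<nu>}))))"
    by (rule group_hom.generate_img[OF pi_ghom]) (use gV_sub[of k Lam] in \<open>fastforce simp: FG_def\<close>)
  also have "\<dots> = piF k Lam a ` spanS KK"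
    by (simp add: gen_union_span[OF gV_sub] union_gV_KK)
  finally show ?thesis .
qed

end


lemma fe_diff_fun: "frag_extend (\<lambda>x. b x - c x) f = frag_extend b f - frag_extend c f"
  by (simp add: frag_extend_def frag_cmul_diff2 sum_subtractf)

lemma pi_carrier: "Poly_Mapping.keys f \<subseteq> gens k Lam \<Longrightarrow> piF k Lam a f \<in> carrier (Gx k Lam a)"
  using pi_hom[of k Lam a] unfolding hom_def by (auto simp: FG_def)

lemma pi_eq:
  assumes "Poly_Mapping.keys f \<subseteq> gens k Lam" "Poly_Mapping.keys f' \<subseteq> gens k Lam" "piF k Lam a f = piF k Lam a f'"
  shows "f - f' \<in> Rel k Lam a"
proof -
  interpret G: group "FG k Lam" by (simp add: FG_def)
  have fc: "f \<in> carrier (FG k Lam)" "f' \<in> carrier (FG k Lam)" using assms by (auto simp: FG_def)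
  have "f \<in> r_coset (FG k Lam) (Rel k Lam a) f" by (rule G.rcos_self[OF fc(1) Rel_sub])
  then have "f \<in> r_coset (FG k Lam) (Rel k Lam a) f'" using assms(3) by (simp add: piF_def)
  then have "f \<otimes>\<^bsub>FG k Lam\<^esub> inv\<^bsub>FG k Lam\<^esub> f' \<in> Rel k Lam a"
    by (rule subgroup.rcos_module_imp[OF Rel_sub G.is_group fc(2)])
  then show ?thesis using fc by (simp add: FG_def)
qed

lemma pi_add:
  assumes "Poly_Mapping.keys f \<subseteq> gens k Lam" "Poly_Mapping.keys f' \<subseteq> gens k Lam"
  shows "piF k Lam a f \<otimes>\<^bsub>Gx k Lam a\<^esub> piF k Lam a f' = piF k Lam a (f + f')"
proof -
  have "piF k Lam a (f \<otimes>\<^bsub>FG k Lam\<^esub> f') = piF k Lam a f \<otimes>\<^bsub>Gx k Lam a\<^esub> piF k Lam a f'"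
    by (rule hom_mult[OF pi_hom]) (use assms in \<open>auto simp: FG_def\<close>)
  then show ?thesis by (simp add: FG_def)
qed

lemma pi_Rel:
  assumes "rr \<in> Rel k Lam a"
  shows "piF k Lam a rr = \<one>\<^bsub>Gx k Lam a\<^esub>"
proof -
  have "r_coset (FG k Lam) (Rel k Lam a) rr = Rel k Lam a"
    by (rule subgroup.rcos_const[OF Rel_sub _ assms]) (simp add: FG_def)
  then show ?thesis by (simp add: piF_def Gx_def)
qed

context algctx begin

definition "Hs = G_U k Lam a Wset"
definition "Gp = subgroup_generated (Gx k Lam a) Hs"
definition "psi f = frag_extend ph f"
definition "Psi x = psi (SOME f. Poly_Mapping.keys f \<subseteq> gW \<and> piF k Lam a f = x)"

lemma gW_gens: "gW \<subseteq> gens k Lam"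
  using gV_sub by (simp add: gW_gV)

lemma KK_gW: "KK \<subseteq> gW"
proof
  fix g assume g: "g \<in> KK"
  have nT: "nTT \<subseteq> TW" by (auto simp: nTT_def)
  from g consider "g = GZ" | \<eta> n where "g = GY \<eta> n" "\<eta> \<in> nTT"
    | \<eta> i n where "g = GX (restr \<eta> i n)" "\<eta> \<in> nTT" "i \<le> k"
    unfolding KK_def by (auto split: if_splits) blast
  then show "g \<in> gW"
  proof cases
    case 1 then show ?thesis by (simp add: gW_def)
  next
    case 2 then show ?thesis unfolding gW_def using nT by blast
  next
    case 3 then show ?thesis unfolding gW_def using nT by blast
  qed
qed

lemma Bg_gW: "Bg \<subseteq> gW"
  by (auto simp: Bg_def)

lemma psi_welldef:
  assumes "Poly_Mapping.keys f \<subseteq> gW" "Poly_Mapping.keys f' \<subseteq> gW" "piF k Lam a f = piF k Lam a f'"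
  shows "psi f = psi f'"
proof -
  have "f - f' \<in> Rel k Lam a" using pi_eq assms gW_gens by blast
  moreover have "Poly_Mapping.keys (f - f') \<subseteq> gW" using assms by (intro kdiff)
  ultimately have "frag_extend ph (f - f') = 0" by (rule psi_kill)
  then show ?thesis by (simp add: psi_def frag_extend_diff)
qed

lemma Psi_pi: "Poly_Mapping.keys f \<subseteq> gW \<Longrightarrow> Psi (piF k Lam a f) = psi f"
proof -
  assume f: "Poly_Mapping.keys f \<subseteq> gW"
  let ?g = "SOME g. Poly_Mapping.keys g \<subseteq> gW \<and> piF k Lam a g = piF k Lam a f"
  have "Poly_Mapping.keys ?g \<subseteq> gW \<and> piF k Lam a ?g = piF k Lam a f"
    by (rule someI[of _ f]) (use f in simp)
  then have "psi ?g = psi f" using f psi_welldef by blast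
  then show ?thesis by (simp add: Psi_def)
qed

lemma Hs_eq: "Hs = piF k Lam a ` spanS gW"
  by (simp add: Hs_def H_eq)

lemma Hs_sub: "subgroup Hs (Gx k Lam a)"
  unfolding Hs_eq by (rule group_hom.subgroup_img_is_subgroup[OF pi_ghom span_sub[OF gW_gens]])

lemma carrier_Gp: "carrier Gp = Hs"
  unfolding Gp_def by (rule subgroup.carrier_subgroup_generated_subgroup[OF Hs_sub])

lemma psi_keys: "Poly_Mapping.keys (psi f) \<subseteq> Bg"
  unfolding psi_def using keys_frag_extend[of ph f] ph_keys by blast

lemma Psi_hom: "group_hom Gp (free_Abelian_group Bg) Psi"
proof -
  have gGp: "group Gp" unfolding Gp_def by (simp add: group.group_subgroup_generated[OF Gx_group])
  have "Psi \<in> hom Gp (free_Abelian_group Bg)"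
  proof (rule homI)
    fix x assume "x \<in> carrier Gp"
    then obtain f where f: "Poly_Mapping.keys f \<subseteq> gW" "x = piF k Lam a f" unfolding carrier_Gp Hs_eq by auto
    show "Psi x \<in> carrier (free_Abelian_group Bg)" using f Psi_pi psi_keys by simp
  next
    fix x y assume "x \<in> carrier Gp" "y \<in> carrier Gp"
    then obtain f f' where f: "Poly_Mapping.keys f \<subseteq> gW" "x = piF k Lam a f"
      and f': "Poly_Mapping.keys f' \<subseteq> gW" "y = piF k Lam a f'" unfolding carrier_Gp Hs_eq by auto
    have "x \<otimes>\<^bsub>Gp\<^esub> y = piF k Lam a (f + f')"
      unfolding Gp_def mult_subgroup_generated f(2) f'(2) using f(1) f'(1) gW_gens by (intro pi_add) auto
    moreover have "Poly_Mapping.keys (f + f') \<subseteq> gW" using f f' keys_add[of f f'] by blast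
    ultimately have "Psi (x \<otimes>\<^bsub>Gp\<^esub> y) = psi (f + f')" using Psi_pi by simp
    also have "\<dots> = psi f + psi f'" by (simp add: psi_def frag_extend_add)
    finally show "Psi (x \<otimes>\<^bsub>Gp\<^esub> y) = Psi x \<otimes>\<^bsub>free_Abelian_group Bg\<^esub> Psi y"
      using f f' Psi_pi by simp
  qed
  then show ?thesis using gGp unfolding group_hom_def group_hom_axioms_def by simp
qed

lemma Psi_surj: "Psi ` carrier Gp = carrier (free_Abelian_group Bg)"
proof
  show "Psi ` carrier Gp \<subseteq> carrier (free_Abelian_group Bg)"
    using group_hom.hom_closed[OF Psi_hom] by blast
  show "carrier (free_Abelian_group Bg) \<subseteq> Psi ` carrier Gp"
  proof
    fix b assume "b \<in> carrier (free_Abelian_group Bg)"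
    then have kb: "Poly_Mapping.keys b \<subseteq> Bg" by simp
    then have kbW: "Poly_Mapping.keys b \<subseteq> gW" using Bg_gW by blast
    have "psi b = frag_extend frag_of b"
      unfolding psi_def
    proof (rule frag_extend_eq)
      fix g assume "g \<in> Poly_Mapping.keys b"
      then have "g \<in> Bg" using kb by blast
      then show "ph g = frag_of g" by (simp add: ph_notE base_def Bg_def)
    qed
    then have "psi b = b" using frag_expansion[of b] by simp
    then have "Psi (piF k Lam a b) = b" using Psi_pi[OF kbW] by simp
    moreover have "piF k Lam a b \<in> carrier Gp" unfolding carrier_Gp Hs_eq using kbW by auto
    ultimately show "b \<in> Psi ` carrier Gp" by (metis image_eqI)
  qed
qed

lemma fe_J: "(\<And>g. g \<in> Poly_Mapping.keys f \<Longrightarrow> D g \<in> Jset) \<Longrightarrow> frag_extend D f \<in> Jset"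
  unfolding frag_extend_def by (intro Jsum Jcmul) auto

lemma Psi_kernel: "kernel Gp (free_Abelian_group Bg) Psi = G_Uu k Lam a U u"
proof
  show "kernel Gp (free_Abelian_group Bg) Psi \<subseteq> G_Uu k Lam a U u"
  proof
    fix x assume "x \<in> kernel Gp (free_Abelian_group Bg) Psi"
    then have x: "x \<in> Hs" "Psi x = 0" unfolding kernel_def carrier_Gp by auto
    then obtain f where f: "Poly_Mapping.keys f \<subseteq> gW" "x = piF k Lam a f" unfolding Hs_eq by auto
    have pf: "psi f = 0" using x(2) f Psi_pi by simp
    have "frag_extend (\<lambda>g. frag_of g - ph g) f \<in> Jset"
      by (rule fe_J) (use f(1) ph_J in blast)
    then have "f - psi f \<in> Jset" by (simp add: fe_diff_fun psi_def frag_expansion[symmetric])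
    then have "f \<in> Jset" using pf by simp
    then obtain kk rr where kr: "f = kk + rr" "Poly_Mapping.keys kk \<subseteq> KK" "rr \<in> Rel k Lam a"
      unfolding Jset_def by blast
    have kkg: "Poly_Mapping.keys kk \<subseteq> gens k Lam" using kr(2) KK_gW gW_gens by blast
    have rrg: "Poly_Mapping.keys rr \<subseteq> gens k Lam" using Rel_carrier[OF kr(3)] by (simp add: FG_def)
    have "piF k Lam a f = piF k Lam a kk \<otimes>\<^bsub>Gx k Lam a\<^esub> piF k Lam a rr"
      unfolding kr(1) by (rule pi_add[symmetric, OF kkg rrg])
    also have "\<dots> = piF k Lam a kk" using pi_Rel[OF kr(3)] monoid.r_one[OF group.is_monoid[OF Gx_group] pi_carrier[OF kkg]] by simp
    finally have "x = piF k Lam a kk" using f(2) by simp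
    then show "x \<in> G_Uu k Lam a U u" unfolding N_eq using kr(2) by auto
  qed
  show "G_Uu k Lam a U u \<subseteq> kernel Gp (free_Abelian_group Bg) Psi"
  proof
    fix x assume "x \<in> G_Uu k Lam a U u"
    then obtain kk where kk: "Poly_Mapping.keys kk \<subseteq> KK" "x = piF k Lam a kk" unfolding N_eq by auto
    have kkW: "Poly_Mapping.keys kk \<subseteq> gW" using kk(1) KK_gW by blast
    have "psi kk = 0" unfolding psi_def by (rule frag_extend_eq_0) (use kk(1) ph_KK in blast)
    then have "Psi x = 0" using Psi_pi[OF kkW] kk(2) by simp
    moreover have "x \<in> carrier Gp" unfolding carrier_Gp Hs_eq using kk(2) kkW by auto
    ultimately show "x \<in> kernel Gp (free_Abelian_group Bg) Psi" unfolding kernel_def by simp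
  qed
qed

theorem core: "\<exists>(B::'s gen set) \<Psi>. group_hom (subgroup_generated (Gx k Lam a) (G_U k Lam a (U \<union> u))) (free_Abelian_group B) \<Psi>
   \<and> \<Psi> ` carrier (subgroup_generated (Gx k Lam a) (G_U k Lam a (U \<union> u))) = carrier (free_Abelian_group B)
   \<and> kernel (subgroup_generated (Gx k Lam a) (G_U k Lam a (U \<union> u))) (free_Abelian_group B) \<Psi> = G_Uu k Lam a U u"
  by (rule exI[of _ Bg], rule exI[of _ Psi]) (use Psi_hom Psi_surj Psi_kernel in \<open>simp add: Gp_def Hs_def Wset_def\<close>)

end


lemma finite_bound:
  assumes "finite D" "\<And>x. x \<in> D \<Longrightarrow> \<exists>i. P x i"
  shows "\<exists>N::nat. \<forall>x\<in>D. \<exists>i<N. P x i"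
proof -
  have "\<forall>x\<in>D. \<exists>i. P x i" using assms(2) by blast
  then obtain f where f: "\<forall>x\<in>D. P x (f x)" by (metis bchoice)
  have "f x < Suc (sum f D)" if "x \<in> D" for x
    using member_le_sum[of x D f] that assms(1) by simp
  then show ?thesis using f by blast
qed

lemma agree_diff:
  assumes "agree_off m \<rho> \<eta>" "\<rho> \<noteq> \<eta>"
  shows "\<exists>i. (\<rho>!m) i \<noteq> (\<eta>!m) i"
proof (rule ccontr)
  assume "\<not> ?thesis"
  then have e: "\<rho>!m = \<eta>!m" by auto
  have "\<rho> = \<eta>"
  proof (rule nth_equalityI)
    show "length \<rho> = length \<eta>" using assms(1) by (simp add: agree_off_def)
    fix i assume "i < length \<rho>"
    then show "\<rho>!i = \<eta>!i" using assms(1) e by (cases "i = m") (auto simp: agree_off_def)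
  qed
  then show False using assms(2) by simp
qed

lemma iso_free:
  assumes "G \<cong> free_Abelian_group X"
  shows "free_abgroup G"
proof -
  obtain h where h: "h \<in> iso G (free_Abelian_group X)" using assms unfolding is_iso_def by blast
  then have bij: "bij_betw h (carrier G) (carrier (free_Abelian_group X))" by (simp add: iso_def)
  define hi where "hi = inv_into (carrier G) h"
  define B where "B = (\<lambda>x. hi (frag_of x)) ` X"
  have fx: "frag_of x \<in> h ` carrier G" if "x \<in> X" for x
    using bij that unfolding bij_betw_def by auto
  have BG: "B \<subseteq> carrier G" unfolding B_def hi_def using fx by (auto intro: inv_into_into)
  have "inj_on (\<lambda>x. hi (frag_of x)) X"
  proof (rule inj_onI)
    fix x y assume xy: "x \<in> X" "y \<in> X" "hi (frag_of x) = hi (frag_of y)"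
    have "frag_of x = h (hi (frag_of x))" unfolding hi_def by (rule f_inv_into_f[symmetric, OF fx[OF xy(1)]])
    also have "\<dots> = h (hi (frag_of y))" using xy(3) by simp
    also have "\<dots> = frag_of y" unfolding hi_def by (rule f_inv_into_f[OF fx[OF xy(2)]])
    finally have "frag_of x = frag_of y" .
    then show "x = y" by (simp add: frag_of_eq)
  qed
  then have "bij_betw (\<lambda>x. hi (frag_of x)) X B" unfolding B_def by (simp add: bij_betw_def)
  then have "X \<approx> B" unfolding eqpoll_def by blast
  then have "free_Abelian_group X \<cong> free_Abelian_group B" by (simp add: isomorphic_free_Abelian_groups)
  then have "G \<cong> free_Abelian_group B" using assms iso_trans by blast
  then show ?thesis unfolding free_abgroup_def using BG by blast
qed

lemma main_core:
  fixes k :: nat and S :: "'s set" and Lam :: "'s tup set" and a :: "'s tup \<Rightarrow> nat \<Rightarrow> int"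
    and U u :: "(nat \<Rightarrow> 's) set"
  assumes ab: "ab_param k S Lam" and fin: "finite u" and disj: "U \<inter> u = {}"
    and cd: "card u + d \<le> k" and la: "le_aleph d U"
  shows "\<exists>(B::'s gen set) \<Psi>. group_hom (subgroup_generated (Gx k Lam a) (G_U k Lam a (U \<union> u))) (free_Abelian_group B) \<Psi>
   \<and> \<Psi> ` carrier (subgroup_generated (Gx k Lam a) (G_U k Lam a (U \<union> u))) = carrier (free_Abelian_group B)
   \<and> kernel (subgroup_generated (Gx k Lam a) (G_U k Lam a (U \<union> u))) (free_Abelian_group B) \<Psi> = G_Uu k Lam a U u"
proof -
  obtain r m where r: "wf r" "\<forall>\<eta>\<in>Tset k U u. \<forall>\<rho>\<in>Tset k U u. \<eta> \<noteq> \<rho> \<longrightarrow> (\<eta>,\<rho>)\<in>r \<or> (\<rho>,\<eta>)\<in>r"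
     "\<forall>\<eta>\<in>Tset k U u. m \<eta> \<le> k \<and> covers u \<eta> (m \<eta>) \<and> finite {\<rho>\<in>Tset k U u. (\<rho>,\<eta>)\<in>r \<and> agree_off (m \<eta>) \<rho> \<eta>}"
    using comb[OF la fin disj cd] by blast
  define P where "P \<eta> N \<longleftrightarrow> (\<forall>\<rho>\<in>Tset k U u. (\<rho>,\<eta>) \<in> r \<and> agree_off (m \<eta>) \<rho> \<eta> \<longrightarrow> (\<exists>i<N. (\<rho>!m \<eta>) i \<noteq> (\<eta>!m \<eta>) i))" for \<eta> N
  define N where "N \<eta> = (SOME N. P \<eta> N)" for \<eta>
  have PN: "P \<eta> (N \<eta>)" if "\<eta> \<in> Tset k U u" for \<eta>
  proof -
    have "\<exists>N::nat. \<forall>\<rho>\<in>{\<rho>\<in>Tset k U u. (\<rho>,\<eta>)\<in>r \<and> agree_off (m \<eta>) \<rho> \<eta>}. \<exists>i<N. (\<rho>!m \<eta>) i \<noteq> (\<eta>!m \<eta>) i"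
    proof (rule finite_bound)
      show "finite {\<rho>\<in>Tset k U u. (\<rho>,\<eta>)\<in>r \<and> agree_off (m \<eta>) \<rho> \<eta>}" using r(3) that by blast
      fix \<rho> assume \<rho>: "\<rho> \<in> {\<rho>\<in>Tset k U u. (\<rho>,\<eta>)\<in>r \<and> agree_off (m \<eta>) \<rho> \<eta>}"
      then have "\<rho> \<noteq> \<eta>" using r(1) by (auto dest: wf_not_refl)
      then show "\<exists>i. (\<rho>!m \<eta>) i \<noteq> (\<eta>!m \<eta>) i" using \<rho> agree_diff by blast
    qed
    then have "\<exists>N. P \<eta> N" unfolding P_def by blast
    then show ?thesis unfolding N_def by (rule someI_ex)
  qed
  interpret algctx k Lam a U u r m N
  proof
    show "\<And>\<eta>. \<eta> \<in> Lam \<Longrightarrow> length \<eta> = Suc k" using ab by (simp add: ab_param_def)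
    show "U \<inter> u = {}" by (rule disj)
    show "finite u" by (rule fin)
    show "wf r" by (rule r(1))
    show "\<And>\<eta> \<rho>. \<eta> \<in> Tset k U u \<Longrightarrow> \<rho> \<in> Tset k U u \<Longrightarrow> \<eta> \<noteq> \<rho> \<Longrightarrow> (\<eta>,\<rho>) \<in> r \<or> (\<rho>,\<eta>) \<in> r"
      using r(2) by blast
    show "\<And>\<eta>. \<eta> \<in> Tset k U u \<Longrightarrow> m \<eta> \<le> k \<and> covers u \<eta> (m \<eta>)" using r(3) by blast
    show "\<And>\<eta> \<rho>. \<eta> \<in> Tset k U u \<Longrightarrow> \<rho> \<in> Tset k U u \<Longrightarrow> (\<rho>,\<eta>) \<in> r \<Longrightarrow> agree_off (m \<eta>) \<rho> \<eta>
        \<Longrightarrow> \<exists>i<N \<eta>. (\<rho>!m \<eta>) i \<noteq> (\<eta>!m \<eta>) i"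
      using PN unfolding P_def by blast
  qed
  show ?thesis by (rule core)
qed

theorem claim1p12:
  fixes k :: nat and S :: "'s set" and Lam :: "'s tup set" and a :: "'s tup \<Rightarrow> nat \<Rightarrow> int"
  assumes "ab_param k S Lam"
  shows "(\<forall>U u j. U \<subseteq> {\<eta>. range \<eta> \<subseteq> S} \<and> u \<subseteq> {\<eta>. range \<eta> \<subseteq> S} - U \<and> finite u
             \<and> j \<le> k \<and> card u \<le> j \<and> le_aleph (k - j) U
           \<longrightarrow> free_abgroup (subgroup_generated (Gx k Lam a) (G_U k Lam a (U \<union> u))
                              Mod G_Uu k Lam a U u))
       \<and> (\<forall>U. U \<subseteq> {\<eta>. range \<eta> \<subseteq> S} \<and> le_aleph k U
           \<longrightarrow> free_abgroup (subgroup_generated (Gx k Lam a) (G_U k Lam a U)))"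
proof (intro conjI allI impI)
  fix U u :: "(nat \<Rightarrow> 's) set" and j :: nat
  assume h: "U \<subseteq> {\<eta>. range \<eta> \<subseteq> S} \<and> u \<subseteq> {\<eta>. range \<eta> \<subseteq> S} - U \<and> finite u
             \<and> j \<le> k \<and> card u \<le> j \<and> le_aleph (k - j) U"
  have disj: "U \<inter> u = {}" using h by blast
  have jk: "j \<le> k" "card u \<le> j" using h by auto
  then have cd: "card u + (k - j) \<le> k" by arith
  have fin: "finite u" and la: "le_aleph (k - j) U" using h by auto
  obtain B :: "'s gen set" and \<Psi> where B: "group_hom (subgroup_generated (Gx k Lam a) (G_U k Lam a (U \<union> u))) (free_Abelian_group B) \<Psi>"
    "\<Psi> ` carrier (subgroup_generated (Gx k Lam a) (G_U k Lam a (U \<union> u))) = carrier (free_Abelian_group B)"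
    "kernel (subgroup_generated (Gx k Lam a) (G_U k Lam a (U \<union> u))) (free_Abelian_group B) \<Psi> = G_Uu k Lam a U u"
    using main_core[OF assms fin disj cd la, of a] by blast
  have "subgroup_generated (Gx k Lam a) (G_U k Lam a (U \<union> u)) Mod G_Uu k Lam a U u \<cong> free_Abelian_group B"
    using group_hom.FactGroup_iso[OF B(1) B(2)] B(3) by simp
  then show "free_abgroup (subgroup_generated (Gx k Lam a) (G_U k Lam a (U \<union> u)) Mod G_Uu k Lam a U u)"
    by (rule iso_free)
next
  fix U :: "(nat \<Rightarrow> 's) set"
  assume h: "U \<subseteq> {\<eta>. range \<eta> \<subseteq> S} \<and> le_aleph k U"
  let ?G = "subgroup_generated (Gx k Lam a) (G_U k Lam a U)"
  have la: "le_aleph k U" using h by auto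
  obtain B :: "'s gen set" and \<Psi> where B: "group_hom ?G (free_Abelian_group B) \<Psi>"
    "\<Psi> ` carrier ?G = carrier (free_Abelian_group B)"
    "kernel ?G (free_Abelian_group B) \<Psi> = G_Uu k Lam a U {}"
    using main_core[OF assms _ _ _ la, of "{}" a] by auto
  have "G_Uu k Lam a U {} = {\<one>\<^bsub>Gx k Lam a\<^esub>}"
    unfolding G_Uu_def by (simp add: group.generate_empty[OF Gx_group])
  then have "kernel ?G (free_Abelian_group B) \<Psi> = {\<one>\<^bsub>?G\<^esub>}" using B(3) by simp
  then have "inj_on \<Psi> (carrier ?G)" using group_hom.inj_iff_trivial_ker[OF B(1)] by simp
  then have "\<Psi> \<in> iso ?G (free_Abelian_group B)"
    using B(1,2) unfolding iso_def bij_betw_def group_hom_def group_hom_axioms_def by simp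
  then have "?G \<cong> free_Abelian_group B" unfolding is_iso_def by blast
  then show "free_abgroup ?G" by (rule iso_free)
qed


end
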